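(* There is an algorithm and a universal constant $C>0$ such that, given any positive integer $T$, $x \in \{0,1\}^T$ and $p \in [0,1]^T$, the algorithm runs in time polynomial in $T$ and outputs a number $v$ with $|v - \mathsf{CalDist}(x,p)| \le C\sqrt{T}$.
   Context: For $x \in \{0,1\}^T$, let $\mathcal{C}(x) = \{q \in [0,1]^T : \sum_{t=1}^T (x_t - q_t)\mathbf{1}[q_t = \alpha] = 0 \text{ for all } \alpha \in [0,1]\}$. The calibration distance of predictions $p \in [0,1]^T$ with respect to outcomes $x$ is $\mathsf{CalDist}(x,p) = \min_{q \in \mathcal{C}(x)} \|p - q\|_1$. *)

theory Defs
  imports Complex_Main
begin

text \<open>Vectors in [0,1]^T / {0,1}^T are functions nat => real, only the
coordinates 0..T-1 are relevant (0-indexed).\<close>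

definition calib_set :: "nat \<Rightarrow> (nat \<Rightarrow> real) \<Rightarrow> (nat \<Rightarrow> real) set" where
  "calib_set T x = {q. (\<forall>t<T. 0 \<le> q t \<and> q t \<le> 1) \<and>
      (\<forall>\<alpha>::real. 0 \<le> \<alpha> \<and> \<alpha> \<le> 1 \<longrightarrow>
         (\<Sum>t<T. (x t - q t) * (if q t = \<alpha> then 1 else 0)) = 0)}"

definition CalDist :: "nat \<Rightarrow> (nat \<Rightarrow> real) \<Rightarrow> (nat \<Rightarrow> real) \<Rightarrow> real" where
  "CalDist T x p = Inf {(\<Sum>t<T. \<bar>p t - q t\<bar>) | q. q \<in> calib_set T x}"

text \<open>No real constants other than those obtained
from naturals, no floor.\<close>

type_synonym state = "(nat \<Rightarrow> nat) \<times> (nat \<Rightarrow> real)"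

datatype nexp = NConst nat | NLoad nexp | NAdd nexp nexp | NSub nexp nexp

datatype rexp = RLoad nexp | RNat nexp | RAdd rexp rexp | RSub rexp rexp
  | RMul rexp rexp | RDiv rexp rexp

datatype bexp = NLess nexp nexp | RLess rexp rexp | BNot bexp | BAnd bexp bexp

datatype com = Skip
  | NStore nexp nexp
  | RStore nexp rexp
  | Seq com com
  | If bexp com com
  | While bexp com

fun neval :: "nexp \<Rightarrow> state \<Rightarrow> nat" where
  "neval (NConst n) s = n"
| "neval (NLoad a) s = fst s (neval a s)"
| "neval (NAdd a b) s = neval a s + neval b s"
| "neval (NSub a b) s = neval a s - neval b s"

fun reval :: "rexp \<Rightarrow> state \<Rightarrow> real" where
  "reval (RLoad a) s = snd s (neval a s)"
| "reval (RNat a) s = real (neval a s)"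
| "reval (RAdd a b) s = reval a s + reval b s"
| "reval (RSub a b) s = reval a s - reval b s"
| "reval (RMul a b) s = reval a s * reval b s"
| "reval (RDiv a b) s = reval a s / reval b s"

fun beval :: "bexp \<Rightarrow> state \<Rightarrow> bool" where
  "beval (NLess a b) s = (neval a s < neval b s)"
| "beval (RLess a b) s = (reval a s < reval b s)"
| "beval (BNot b) s = (\<not> beval b s)"
| "beval (BAnd a b) s = (beval a s \<and> beval b s)"

text \<open>Big-step semantics: exec c s n s' means c started in s terminates in s'
after n time steps.\<close>

inductive exec :: "com \<Rightarrow> state \<Rightarrow> nat \<Rightarrow> state \<Rightarrow> bool" where
  "exec Skip s 1 s"
| "exec (NStore a e) s 1 ((fst s)(neval a s := neval e s), snd s)"
| "exec (RStore a e) s 1 (fst s, (snd s)(neval a s := reval e s))"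
| "exec c1 s n1 s1 \<Longrightarrow> exec c2 s1 n2 s2 \<Longrightarrow> exec (Seq c1 c2) s (n1 + n2) s2"
| "beval b s \<Longrightarrow> exec c1 s n s' \<Longrightarrow> exec (If b c1 c2) s (Suc n) s'"
| "\<not> beval b s \<Longrightarrow> exec c2 s n s' \<Longrightarrow> exec (If b c1 c2) s (Suc n) s'"
| "\<not> beval b s \<Longrightarrow> exec (While b c) s 1 s"
| "beval b s \<Longrightarrow> exec c s n1 s1 \<Longrightarrow> exec (While b c) s1 n2 s2 \<Longrightarrow>
     exec (While b c) s (Suc (n1 + n2)) s2"

text \<open>Input encoding: nat register 0 holds T; real register 1+t holds x_t and
real register 1+T+t holds p_t (t < T); everything else is 0.
The output is read from real register 0.\<close>

definition init_state :: "nat \<Rightarrow> (nat \<Rightarrow> real) \<Rightarrow> (nat \<Rightarrow> real) \<Rightarrow> state" where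
  "init_state T x p =
     ((\<lambda>i. if i = 0 then T else 0),
      (\<lambda>i. if 1 \<le> i \<and> i \<le> T then x (i - 1)
           else if T + 1 \<le> i \<and> i \<le> 2 * T then p (i - T - 1) else 0))"

end

theory Submission
  imports Defs
begin


definition prec :: "(nat \<Rightarrow> real) \<Rightarrow> nat \<Rightarrow> nat \<Rightarrow> bool" where
  "prec p s t \<longleftrightarrow> p s < p t \<or> (p s = p t \<and> s < t)"

definition rk :: "nat \<Rightarrow> (nat \<Rightarrow> real) \<Rightarrow> (nat \<Rightarrow> real) \<Rightarrow> nat \<Rightarrow> nat" where
  "rk T x p t = card {s. s < T \<and> x s = x t \<and> prec p s t}"

definition inblk :: "nat \<Rightarrow> (nat \<Rightarrow> real) \<Rightarrow> (nat \<Rightarrow> real) \<Rightarrow> nat \<Rightarrow> nat \<Rightarrow> nat \<Rightarrow> nat \<Rightarrow> nat \<Rightarrow> bool" where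
  "inblk T x p a b i j t \<longleftrightarrow> (if x t = 0 then a \<le> rk T x p t \<and> rk T x p t < i
                                  else b \<le> rk T x p t \<and> rk T x p t < j)"

definition vl :: "nat \<Rightarrow> nat \<Rightarrow> nat \<Rightarrow> nat \<Rightarrow> real" where
  "vl a b i j = real (j - b) / real ((i - a) + (j - b))"

definition bc :: "nat \<Rightarrow> (nat \<Rightarrow> real) \<Rightarrow> (nat \<Rightarrow> real) \<Rightarrow> nat \<Rightarrow> nat \<Rightarrow> nat \<Rightarrow> nat \<Rightarrow> real" where
  "bc T x p a b i j = (\<Sum>t<T. if inblk T x p a b i j t then \<bar>p t - vl a b i j\<bar> else 0)"

definition preds :: "nat \<Rightarrow> nat \<Rightarrow> (nat \<times> nat) set" where
  "preds i j = {ab. fst ab \<le> i \<and> snd ab \<le> j \<and> ab \<noteq> (i, j)}"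

function Dv :: "nat \<Rightarrow> (nat \<Rightarrow> real) \<Rightarrow> (nat \<Rightarrow> real) \<Rightarrow> nat \<Rightarrow> nat \<Rightarrow> real" where
  "Dv T x p i j = (if i = 0 \<and> j = 0 then 0 else
     Min ((\<lambda>ab. Dv T x p (fst ab) (snd ab) + bc T x p (fst ab) (snd ab) i j) ` preds i j))"
  by auto
termination
  by (relation "measure (\<lambda>(T,x,p,i,j). i + j)") (auto simp: preds_def)

declare Dv.simps [simp del]

lemma Dv_00: "Dv T x p 0 0 = 0"
  by (simp add: Dv.simps)

lemma finite_preds: "finite (preds i j)"
  by (rule finite_subset[of _ "{..i} \<times> {..j}"]) (auto simp: preds_def)

lemma preds_ne: "(i, j) \<noteq> (0, 0) \<Longrightarrow> (0, 0) \<in> preds i j"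
  by (auto simp: preds_def)

lemma Dv_rec: "(i, j) \<noteq> (0, 0) \<Longrightarrow> Dv T x p i j =
   Min ((\<lambda>ab. Dv T x p (fst ab) (snd ab) + bc T x p (fst ab) (snd ab) i j) ` preds i j)"
  by (subst Dv.simps) auto

lemma Dv_le: "(i, j) \<noteq> (0, 0) \<Longrightarrow> a \<le> i \<Longrightarrow> b \<le> j \<Longrightarrow> (a, b) \<noteq> (i, j) \<Longrightarrow>
   Dv T x p i j \<le> Dv T x p a b + bc T x p a b i j"
  apply (subst Dv_rec, assumption)
  apply (rule Min_le)
  using finite_preds apply blast
  by (rule image_eqI[where x="(a,b)"]) (auto simp: preds_def)

lemma Dv_ex: "(i, j) \<noteq> (0, 0) \<Longrightarrow> \<exists>a b. a \<le> i \<and> b \<le> j \<and> (a, b) \<noteq> (i, j) \<and>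
   Dv T x p i j = Dv T x p a b + bc T x p a b i j"
proof -
  assume h: "(i, j) \<noteq> (0, 0)"
  have "Dv T x p i j \<in> ((\<lambda>ab. Dv T x p (fst ab) (snd ab) + bc T x p (fst ab) (snd ab) i j) ` preds i j)"
    unfolding Dv_rec[OF h] using finite_preds preds_ne[OF h] by (intro Min_in) auto
  then obtain ab where "ab \<in> preds i j" "Dv T x p i j = Dv T x p (fst ab) (snd ab) + bc T x p (fst ab) (snd ab) i j"
    by blast
  then show ?thesis by (intro exI[of _ "fst ab"] exI[of _ "snd ab"]) (auto simp: preds_def)
qed

lemma card_lt_rank:
  assumes "finite Z" "\<And>s. s\<in>Z \<Longrightarrow> \<not> R s s"
    "\<And>s t u. s\<in>Z \<Longrightarrow> t\<in>Z \<Longrightarrow> u\<in>Z \<Longrightarrow> R s t \<Longrightarrow> R t u \<Longrightarrow> R s u"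
    "s \<in> Z" "t \<in> Z" "R s t"
  shows "card {u\<in>Z. R u s} < card {u\<in>Z. R u t}"
proof (rule psubset_card_mono)
  show "finite {u\<in>Z. R u t}" using assms(1) by simp
  have "{u\<in>Z. R u s} \<subseteq> {u\<in>Z. R u t}"
  proof
    fix u assume "u \<in> {u\<in>Z. R u s}"
    then have "u \<in> Z" "R u s" by simp_all
    then show "u \<in> {u\<in>Z. R u t}" using assms(3)[of u s t] assms(4-6) by simp
  qed
  moreover have "s \<in> {u\<in>Z. R u t} - {u\<in>Z. R u s}" using assms(2)[of s] assms(4,6) by simp
  ultimately show "{u\<in>Z. R u s} \<subset> {u\<in>Z. R u t}" by blast
qed

lemma rank_bij:
  assumes "finite Z" "\<And>s. s\<in>Z \<Longrightarrow> \<not> R s s"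
    "\<And>s t u. s\<in>Z \<Longrightarrow> t\<in>Z \<Longrightarrow> u\<in>Z \<Longrightarrow> R s t \<Longrightarrow> R t u \<Longrightarrow> R s u"
    "\<And>s t. s\<in>Z \<Longrightarrow> t\<in>Z \<Longrightarrow> s \<noteq> t \<Longrightarrow> R s t \<or> R t s"
  shows "bij_betw (\<lambda>t. card {u\<in>Z. R u t}) Z {..<card Z}"
proof -
  let ?f = "\<lambda>t. card {u\<in>Z. R u t}"
  have inj: "inj_on ?f Z"
  proof (rule inj_onI)
    fix s t assume st: "s \<in> Z" "t \<in> Z" "?f s = ?f t"
    show "s = t"
    proof (rule ccontr)
      assume "s \<noteq> t"
      then have "R s t \<or> R t s" using assms(4) st by blast
      then show False using card_lt_rank[where Z=Z and R=R and s=s and t=t, OF assms(1-3)] card_lt_rank[where Z=Z and R=R and s=t and t=s, OF assms(1-3)] st by auto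
    qed
  qed
  have sub: "?f ` Z \<subseteq> {..<card Z}"
  proof
    fix y assume "y \<in> ?f ` Z"
    then obtain t where t: "t \<in> Z" "y = ?f t" by auto
    have "t \<notin> {u\<in>Z. R u t}" using assms(2)[of t] t by simp
    then have "{u\<in>Z. R u t} \<subset> Z" using t by blast
    then have "?f t < card Z" by (rule psubset_card_mono[OF assms(1)])
    then show "y \<in> {..<card Z}" using t by auto
  qed
  have "card (?f ` Z) = card {..<card Z}" using card_image[OF inj] by simp
  then have "?f ` Z = {..<card Z}" using sub by (intro card_subset_eq) auto
  then show ?thesis using inj by (simp add: bij_betw_def)
qed

lemma bij_card_pre:
  assumes "bij_betw f A B"
  shows "card {t\<in>A. f t \<in> S} = card (B \<inter> S)"
proof -
  have "bij_betw f {t\<in>A. f t \<in> S} (B \<inter> S)"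
    using assms unfolding bij_betw_def inj_on_def by auto
  then show ?thesis by (rule bij_betw_same_card)
qed

lemma prec_props:
  "\<not> prec p s s"
  "prec p s t \<Longrightarrow> prec p t u \<Longrightarrow> prec p s u"
  "s \<noteq> t \<Longrightarrow> prec p s t \<or> prec p t s"
  "prec p s t \<Longrightarrow> p s \<le> p t"
  unfolding prec_def by auto

lemma rk_eq: "x t = c \<Longrightarrow> rk T x p t = card {u\<in>{s. s < T \<and> x s = c}. prec p u t}"
  unfolding rk_def by (rule arg_cong[where f=card]) auto

lemma rk_bij: "bij_betw (rk T x p) {s. s < T \<and> x s = c} {..<card {s. s < T \<and> x s = c}}"
proof -
  have "bij_betw (\<lambda>t. card {u\<in>{s. s < T \<and> x s = c}. prec p u t}) {s. s < T \<and> x s = c}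
          {..<card {s. s < T \<and> x s = c}}"
    by (rule rank_bij) (auto simp: prec_def)
  then show ?thesis
    by (rule bij_betw_cong[THEN iffD1, rotated]) (simp add: rk_eq)
qed

lemma card_rk_range:
  assumes "i \<le> card {s. s < T \<and> x s = c}"
  shows "card {t. t < T \<and> x t = c \<and> a \<le> rk T x p t \<and> rk T x p t < i} = i - a"
proof -
  have "card {t\<in>{s. s < T \<and> x s = c}. rk T x p t \<in> {a..<i}} =
        card ({..<card {s. s < T \<and> x s = c}} \<inter> {a..<i})"
    by (rule bij_card_pre[OF rk_bij])
  also have "{..<card {s. s < T \<and> x s = c}} \<inter> {a..<i} = {a..<i}" using assms by auto
  finally show ?thesis by (simp add: conj_assoc)
qed

lemma rk_less_card: "t < T \<Longrightarrow> x t = c \<Longrightarrow> rk T x p t < card {s. s < T \<and> x s = c}"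
  using rk_bij[of T x p c] unfolding bij_betw_def by auto


lemma swap_ineq: "(a::real) \<le> b \<Longrightarrow> c \<le> d \<Longrightarrow> \<bar>a - c\<bar> + \<bar>b - d\<bar> \<le> \<bar>a - d\<bar> + \<bar>b - c\<bar>"
  by (simp add: abs_if)

lemma card_split_pt:
  assumes "finite Z" "t0 \<in> Z"
  shows "card {t\<in>Z. f t = \<alpha>} = (if f t0 = \<alpha> then 1 else 0) + card {t\<in>Z - {t0}. f t = \<alpha>}"
proof -
  have "{t\<in>Z. f t = \<alpha>} = (if f t0 = \<alpha> then {t0} else {}) \<union> {t\<in>Z - {t0}. f t = \<alpha>}"
    using assms by auto
  moreover have "finite {t\<in>Z - {t0}. f t = \<alpha>}" using assms by simp
  ultimately show ?thesis by (simp add: card_insert_if)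
qed

lemma monot:
  assumes "finite Z" "\<And>s. s\<in>Z \<Longrightarrow> \<not> R s s"
    "\<And>s t u. s\<in>Z \<Longrightarrow> t\<in>Z \<Longrightarrow> u\<in>Z \<Longrightarrow> R s t \<Longrightarrow> R t u \<Longrightarrow> R s u"
    "\<And>s t. s\<in>Z \<Longrightarrow> t\<in>Z \<Longrightarrow> s \<noteq> t \<Longrightarrow> R s t \<or> R t s"
    "\<And>s t. s\<in>Z \<Longrightarrow> t\<in>Z \<Longrightarrow> R s t \<Longrightarrow> (p::'a \<Rightarrow> real) s \<le> p t"
  shows "\<exists>w'. (\<forall>\<alpha>. card {t\<in>Z. w' t = \<alpha>} = card {t\<in>Z. w t = \<alpha>}) \<and>
     (\<Sum>t\<in>Z. \<bar>p t - w' t\<bar>) \<le> (\<Sum>t\<in>Z. \<bar>p t - w t\<bar>) \<and>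
     (\<forall>s\<in>Z. \<forall>t\<in>Z. R s t \<longrightarrow> w' s \<le> (w' t :: real))"
  using assms
proof (induction "card Z" arbitrary: Z w rule: less_induct)
  case less
  show ?case
  proof (cases "Z = {}")
    case True
    then show ?thesis by (intro exI[of _ w]) auto
  next
    case False
    have fin: "finite Z" by fact
    have bij: "bij_betw (\<lambda>t. card {u\<in>Z. R u t}) Z {..<card Z}"
      by (rule rank_bij[OF less.prems(1-4)])
    have "0 \<in> {..<card Z}" using False fin by (simp add: card_gt_0_iff)
    moreover have "(\<lambda>t. card {u\<in>Z. R u t}) ` Z = {..<card Z}" using bij by (simp add: bij_betw_def)
    ultimately have "0 \<in> (\<lambda>t. card {u\<in>Z. R u t}) ` Z" by simp
    then obtain t0 where t0: "t0 \<in> Z" "card {u\<in>Z. R u t0} = 0"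
      by (auto simp del: card_eq_0_iff)
    have t0min: "\<And>u. u \<in> Z \<Longrightarrow> \<not> R u t0"
      using t0 fin by (simp add: card_eq_0_iff)
    have "Min (w ` Z) \<in> w ` Z" using fin False by (intro Min_in) auto
    then obtain s0 where s0: "s0 \<in> Z" "Min (w ` Z) = w s0" by blast
    have s0min: "w s0 \<le> w u" if "u \<in> Z" for u
    proof -
      have "Min (w ` Z) \<le> w u" using fin that by simp
      then show ?thesis using s0 by simp
    qed
    define \<sigma> where "\<sigma> t = (if t = t0 then s0 else if t = s0 then t0 else t)" for t
    define w1 where "w1 t = w (\<sigma> t)" for t
    have sig_inv: "\<sigma> (\<sigma> t) = t" for t unfolding \<sigma>_def by auto
    have sigZ: "\<And>t. t \<in> Z \<Longrightarrow> \<sigma> t \<in> Z" unfolding \<sigma>_def using t0 s0 by auto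
    have card1: "card {t\<in>Z. w1 t = \<alpha>} = card {t\<in>Z. w t = \<alpha>}" for \<alpha>
    proof -
      have "{t\<in>Z. w1 t = \<alpha>} = \<sigma> ` {t\<in>Z. w t = \<alpha>}"
      proof (rule set_eqI, rule iffI)
        fix t assume "t \<in> {t\<in>Z. w1 t = \<alpha>}"
        then have "\<sigma> t \<in> {t\<in>Z. w t = \<alpha>}" using sigZ by (simp add: w1_def)
        then show "t \<in> \<sigma> ` {t\<in>Z. w t = \<alpha>}" using sig_inv[of t] by (metis image_eqI)
      next
        fix t assume "t \<in> \<sigma> ` {t\<in>Z. w t = \<alpha>}"
        then obtain u where "u \<in> Z" "w u = \<alpha>" "t = \<sigma> u" by auto
        then show "t \<in> {t\<in>Z. w1 t = \<alpha>}" using sigZ sig_inv by (simp add: w1_def)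
      qed
      moreover have "inj_on \<sigma> {t\<in>Z. w t = \<alpha>}" by (metis inj_on_inverseI sig_inv)
      ultimately show ?thesis by (simp add: card_image)
    qed
    have cost1: "(\<Sum>t\<in>Z. \<bar>p t - w1 t\<bar>) \<le> (\<Sum>t\<in>Z. \<bar>p t - w t\<bar>)"
    proof (cases "t0 = s0")
      case True
      then have "w1 = w" unfolding w1_def \<sigma>_def by auto
      then show ?thesis by simp
    next
      case ne: False
      have R: "R t0 s0" using less.prems(4)[OF t0(1) s0(1) ne] t0min[OF s0(1)] by blast
      have pp: "p t0 \<le> p s0" using less.prems(5)[OF t0(1) s0(1) R] .
      have ww: "w s0 \<le> w t0" using s0min[OF t0(1)] .
      let ?Y = "Z - {t0, s0}"
      have split: "(\<Sum>t\<in>Z. f t) = f t0 + f s0 + (\<Sum>t\<in>?Y. f t)" for f :: "'a \<Rightarrow> real"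
      proof -
        have "Z = insert t0 (insert s0 ?Y)" using t0 s0 by auto
        then have "(\<Sum>t\<in>Z. f t) = (\<Sum>t\<in>insert t0 (insert s0 ?Y). f t)" by simp
        also have "\<dots> = f t0 + f s0 + (\<Sum>t\<in>?Y. f t)" using fin ne by simp
        finally show ?thesis .
      qed
      have eqY: "(\<Sum>t\<in>?Y. \<bar>p t - w1 t\<bar>) = (\<Sum>t\<in>?Y. \<bar>p t - w t\<bar>)"
        by (rule sum.cong) (auto simp: w1_def \<sigma>_def)
      have "w1 t0 = w s0" "w1 s0 = w t0" using ne by (auto simp: w1_def \<sigma>_def)
      then show ?thesis using swap_ineq[OF pp ww] eqY
        by (simp only: split[of "\<lambda>t. \<bar>p t - w1 t\<bar>"] split[of "\<lambda>t. \<bar>p t - w t\<bar>"])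
    qed
    let ?Z' = "Z - {t0}"
    have cardlt: "card ?Z' < card Z" using fin t0(1) by (rule card_Diff1_less)
    have "\<exists>w2. (\<forall>\<alpha>. card {t\<in>?Z'. w2 t = \<alpha>} = card {t\<in>?Z'. w1 t = \<alpha>}) \<and>
      (\<Sum>t\<in>?Z'. \<bar>p t - w2 t\<bar>) \<le> (\<Sum>t\<in>?Z'. \<bar>p t - w1 t\<bar>) \<and>
      (\<forall>s\<in>?Z'. \<forall>t\<in>?Z'. R s t \<longrightarrow> w2 s \<le> w2 t)"
    proof (rule less.hyps[OF cardlt])
      show "finite ?Z'" using fin by simp
      show "\<And>s. s \<in> ?Z' \<Longrightarrow> \<not> R s s" using less.prems(2) by simp
      show "\<And>s t u. s \<in> ?Z' \<Longrightarrow> t \<in> ?Z' \<Longrightarrow> u \<in> ?Z' \<Longrightarrow> R s t \<Longrightarrow> R t u \<Longrightarrow> R s u"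
        using less.prems(3) by (meson DiffD1)
      show "\<And>s t. s \<in> ?Z' \<Longrightarrow> t \<in> ?Z' \<Longrightarrow> s \<noteq> t \<Longrightarrow> R s t \<or> R t s"
        using less.prems(4) by (meson DiffD1)
      show "\<And>s t. s \<in> ?Z' \<Longrightarrow> t \<in> ?Z' \<Longrightarrow> R s t \<Longrightarrow> p s \<le> p t"
        using less.prems(5) by (meson DiffD1)
    qed
    then obtain w2 where w2: "\<forall>\<alpha>. card {t\<in>?Z'. w2 t = \<alpha>} = card {t\<in>?Z'. w1 t = \<alpha>}"
      "(\<Sum>t\<in>?Z'. \<bar>p t - w2 t\<bar>) \<le> (\<Sum>t\<in>?Z'. \<bar>p t - w1 t\<bar>)"
      "\<forall>s\<in>?Z'. \<forall>t\<in>?Z'. R s t \<longrightarrow> w2 s \<le> w2 t"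
      by blast
    define w' where "w' t = (if t = t0 then w s0 else w2 t)" for t
    have w1t0: "w1 t0 = w s0" by (simp add: w1_def \<sigma>_def)
    have c': "card {t\<in>Z. w' t = \<alpha>} = card {t\<in>Z. w t = \<alpha>}" for \<alpha>
    proof -
      have "card {t\<in>Z. w' t = \<alpha>} = (if w' t0 = \<alpha> then 1 else 0) + card {t\<in>?Z'. w' t = \<alpha>}"
        by (rule card_split_pt[OF fin t0(1)])
      also have "{t\<in>?Z'. w' t = \<alpha>} = {t\<in>?Z'. w2 t = \<alpha>}" by (auto simp: w'_def)
      also have "card \<dots> = card {t\<in>?Z'. w1 t = \<alpha>}" using w2(1) by simp
      also have "(if w' t0 = \<alpha> then 1 else 0) + \<dots> = card {t\<in>Z. w1 t = \<alpha>}"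
        using card_split_pt[OF fin t0(1), of w1 \<alpha>] w1t0 by (simp add: w'_def)
      finally show ?thesis using card1 by simp
    qed
    have cst: "(\<Sum>t\<in>Z. \<bar>p t - w' t\<bar>) \<le> (\<Sum>t\<in>Z. \<bar>p t - w t\<bar>)"
    proof -
      have "(\<Sum>t\<in>Z. \<bar>p t - w' t\<bar>) = \<bar>p t0 - w' t0\<bar> + (\<Sum>t\<in>?Z'. \<bar>p t - w' t\<bar>)"
        using fin t0(1) by (rule sum.remove)
      also have "(\<Sum>t\<in>?Z'. \<bar>p t - w' t\<bar>) = (\<Sum>t\<in>?Z'. \<bar>p t - w2 t\<bar>)"
        by (rule sum.cong) (auto simp: w'_def)
      also have "\<bar>p t0 - w' t0\<bar> = \<bar>p t0 - w1 t0\<bar>" using w1t0 by (simp add: w'_def)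
      also have "\<bar>p t0 - w1 t0\<bar> + (\<Sum>t\<in>?Z'. \<bar>p t - w2 t\<bar>) \<le> \<bar>p t0 - w1 t0\<bar> + (\<Sum>t\<in>?Z'. \<bar>p t - w1 t\<bar>)"
        using w2(2) by simp
      also have "\<dots> = (\<Sum>t\<in>Z. \<bar>p t - w1 t\<bar>)"
        using sum.remove[OF fin t0(1), of "\<lambda>t. \<bar>p t - w1 t\<bar>"] by simp
      finally show ?thesis using cost1 by simp
    qed
    have mono: "\<forall>s\<in>Z. \<forall>t\<in>Z. R s t \<longrightarrow> w' s \<le> w' t"
    proof (intro ballI impI)
      fix s t assume st: "s \<in> Z" "t \<in> Z" "R s t"
      have "t \<noteq> t0" using t0min st by blast
      show "w' s \<le> w' t"
      proof (cases "s = t0")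
        case True
        have "card {u\<in>?Z'. w2 u = w2 t} > 0" using st \<open>t \<noteq> t0\<close> fin by (auto simp: card_gt_0_iff)
        then have "card {u\<in>?Z'. w1 u = w2 t} > 0" using w2(1) by simp
        then obtain u where u: "u \<in> ?Z'" "w1 u = w2 t" by (auto simp: card_gt_0_iff)
        have "w s0 \<le> w1 u" unfolding w1_def using s0min sigZ u by simp
        then show ?thesis using True u \<open>t \<noteq> t0\<close> by (simp add: w'_def)
      next
        case False
        then show ?thesis using w2(3) st \<open>t \<noteq> t0\<close> by (simp add: w'_def)
      qed
    qed
    show ?thesis using c' cst mono by blast
  qed
qed


locale cdl =
  fixes T :: nat and x p :: "nat \<Rightarrow> real"
  assumes x01: "\<And>t. t < T \<Longrightarrow> x t = 0 \<or> x t = 1"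
    and p01: "\<And>t. t < T \<Longrightarrow> 0 \<le> p t \<and> p t \<le> 1"
begin

abbreviation "n0 \<equiv> card {t. t < T \<and> x t = 0}"
abbreviation "n1 \<equiv> card {t. t < T \<and> x t = 1}"
abbreviation "r \<equiv> rk T x p"

definition Sij :: "nat \<Rightarrow> nat \<Rightarrow> nat set" where
  "Sij i j = {t. t < T \<and> (if x t = 0 then r t < i else r t < j)}"

lemma sum_split01: "(\<Sum>t<T. f t) = (\<Sum>t\<in>{t. t < T \<and> x t = 0}. f t) + (\<Sum>t\<in>{t. t < T \<and> x t = 1}. f t)"
proof -
  have "{..<T} = {t. t < T \<and> x t = 0} \<union> {t. t < T \<and> x t = 1}" using x01 by auto
  then have "(\<Sum>t<T. f t) = (\<Sum>t\<in>{t. t < T \<and> x t = 0} \<union> {t. t < T \<and> x t = 1}. f t)" by simp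
  also have "\<dots> = (\<Sum>t\<in>{t. t < T \<and> x t = 0}. f t) + (\<Sum>t\<in>{t. t < T \<and> x t = 1}. f t)"
    by (rule sum.union_disjoint) auto
  finally show ?thesis .
qed

lemma sum_ind: "finite A \<Longrightarrow> (\<Sum>t\<in>A. (if P t then c else 0)) = c * real (card {t\<in>A. P t})"
  by (simp add: sum.inter_filter[symmetric])

lemma calsum: "(\<Sum>t<T. (x t - f t) * (if f t = \<alpha> then 1 else 0)) =
   (1 - \<alpha>) * card {t. t < T \<and> x t = 1 \<and> f t = \<alpha>} - \<alpha> * card {t. t < T \<and> x t = 0 \<and> f t = \<alpha>}"
proof -
  have A: "(\<Sum>t\<in>{t. t < T \<and> x t = 0}. (x t - f t) * (if f t = \<alpha> then 1 else 0)) =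
     (\<Sum>t\<in>{t. t < T \<and> x t = 0}. (if f t = \<alpha> then - \<alpha> else 0))"
    by (rule sum.cong) auto
  have B: "(\<Sum>t\<in>{t. t < T \<and> x t = 1}. (x t - f t) * (if f t = \<alpha> then 1 else 0)) =
     (\<Sum>t\<in>{t. t < T \<and> x t = 1}. (if f t = \<alpha> then 1 - \<alpha> else 0))"
    by (rule sum.cong) auto
  have C0: "{t \<in> {t. t < T \<and> x t = 0}. f t = \<alpha>} = {t. t < T \<and> x t = 0 \<and> f t = \<alpha>}" by auto
  have C1: "{t \<in> {t. t < T \<and> x t = 1}. f t = \<alpha>} = {t. t < T \<and> x t = 1 \<and> f t = \<alpha>}" by auto
  have D0: "(\<Sum>t\<in>{t. t < T \<and> x t = 0}. (if f t = \<alpha> then - \<alpha> else 0)) = - \<alpha> * card {t. t < T \<and> x t = 0 \<and> f t = \<alpha>}"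
    using sum_ind[of "{t. t < T \<and> x t = 0}" "\<lambda>t. f t = \<alpha>" "- \<alpha>"] C0 by simp
  have D1: "(\<Sum>t\<in>{t. t < T \<and> x t = 1}. (if f t = \<alpha> then 1 - \<alpha> else 0)) = (1 - \<alpha>) * card {t. t < T \<and> x t = 1 \<and> f t = \<alpha>}"
    using sum_ind[of "{t. t < T \<and> x t = 1}" "\<lambda>t. f t = \<alpha>" "1 - \<alpha>"] C1 by simp
  show ?thesis unfolding sum_split01[of "\<lambda>t. (x t - f t) * (if f t = \<alpha> then 1 else 0)"] A B D0 D1
    by simp
qed


lemma achieve:
  "i \<le> n0 \<Longrightarrow> j \<le> n1 \<Longrightarrow> \<exists>q. (\<forall>t. 0 \<le> q t \<and> q t \<le> 1) \<and>
     (\<forall>\<alpha>. (\<Sum>t\<in>Sij i j. (x t - q t) * (if q t = \<alpha> then 1 else 0)) = 0) \<and>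
     (\<Sum>t\<in>Sij i j. \<bar>p t - q t\<bar>) = Dv T x p i j"
proof (induction "i + j" arbitrary: i j rule: less_induct)
  case less
  show ?case
  proof (cases "(i, j) = (0, 0)")
    case True
    then have "Sij i j = {}" by (auto simp: Sij_def)
    then show ?thesis using True by (intro exI[of _ "\<lambda>_. 0"]) (auto simp: Dv_00)
  next
    case False
    obtain a b where ab: "a \<le> i" "b \<le> j" "(a, b) \<noteq> (i, j)"
      "Dv T x p i j = Dv T x p a b + bc T x p a b i j" using Dv_ex[OF False] by blast
    have "a + b < i + j" using ab by auto
    have "\<exists>q. (\<forall>t. 0 \<le> q t \<and> q t \<le> 1) \<and>
     (\<forall>\<alpha>. (\<Sum>t\<in>Sij a b. (x t - q t) * (if q t = \<alpha> then 1 else 0)) = 0) \<and>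
     (\<Sum>t\<in>Sij a b. \<bar>p t - q t\<bar>) = Dv T x p a b"
      by (rule less.hyps[OF \<open>a + b < i + j\<close>]) (use less.prems ab in auto)
    then obtain q' where q': "\<forall>t. 0 \<le> q' t \<and> q' t \<le> 1"
      "\<forall>\<alpha>. (\<Sum>t\<in>Sij a b. (x t - q' t) * (if q' t = \<alpha> then 1 else 0)) = 0"
      "(\<Sum>t\<in>Sij a b. \<bar>p t - q' t\<bar>) = Dv T x p a b" by blast
    define v where "v = vl a b i j"
    define Blk where "Blk = {t. t < T \<and> inblk T x p a b i j t}"
    have sub: "Sij a b \<subseteq> Sij i j" using ab by (auto simp: Sij_def)
    have blk: "Sij i j - Sij a b = Blk" using ab by (auto simp: Sij_def Blk_def inblk_def)
    have finS: "finite (Sij i j)" by (simp add: Sij_def)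
    have finB: "finite Blk" by (simp add: Blk_def)
    have e0: "{t\<in>Blk. x t = 0} = {t. t < T \<and> x t = 0 \<and> a \<le> r t \<and> r t < i}"
      by (auto simp: Blk_def inblk_def)
    have e1: "{t\<in>Blk. x t = 1} = {t. t < T \<and> x t = 1 \<and> b \<le> r t \<and> r t < j}"
      by (auto simp: Blk_def inblk_def)
    have cz: "card {t\<in>Blk. x t = 0} = i - a" unfolding e0 by (rule card_rk_range) (use less.prems in simp)
    have co: "card {t\<in>Blk. x t = 1} = j - b" unfolding e1 by (rule card_rk_range) (use less.prems in simp)
    have Beq: "Blk = {t\<in>Blk. x t = 0} \<union> {t\<in>Blk. x t = 1}" using x01 by (auto simp: Blk_def)
    have "card ({t\<in>Blk. x t = 0} \<union> {t\<in>Blk. x t = 1}) = card {t\<in>Blk. x t = 0} + card {t\<in>Blk. x t = 1}"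
      by (rule card_Un_disjoint) (use finB in auto)
    then have cB: "card Blk = (i - a) + (j - b)"
      using cz co by (simp add: Beq[symmetric])
    have den: "(i - a) + (j - b) > 0" using ab by auto
    have sx: "(\<Sum>t\<in>Blk. x t) = real (j - b)"
    proof -
      have "(\<Sum>t\<in>Blk. x t) = (\<Sum>t\<in>Blk. if x t = 1 then 1 else 0)"
        by (rule sum.cong) (use x01 in \<open>auto simp: Blk_def\<close>)
      also have "\<dots> = real (card {t\<in>Blk. x t = 1})" using sum_ind[OF finB, of "\<lambda>t. x t = 1" 1] by simp
      finally show ?thesis using co by simp
    qed
    have vden: "v * real ((i - a) + (j - b)) = real (j - b)" using den by (simp add: v_def vl_def)
    have v01: "0 \<le> v \<and> v \<le> 1" using den by (auto simp: v_def vl_def divide_le_eq_1)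
    define q where "q t = (if t \<in> Sij a b then q' t else v)" for t
    have splitS: "(\<Sum>t\<in>Sij i j. f t) = (\<Sum>t\<in>Sij a b. f t) + (\<Sum>t\<in>Blk. f t)" for f :: "nat \<Rightarrow> real"
      using sum.subset_diff[OF sub finS, of f] blk by simp
    have blkout: "t \<in> Blk \<Longrightarrow> t \<notin> Sij a b" for t using blk by blast
    have cal: "(\<Sum>t\<in>Sij i j. (x t - q t) * (if q t = \<alpha> then 1 else 0)) = 0" for \<alpha>
    proof -
      have "(\<Sum>t\<in>Sij a b. (x t - q t) * (if q t = \<alpha> then 1 else 0)) =
            (\<Sum>t\<in>Sij a b. (x t - q' t) * (if q' t = \<alpha> then 1 else 0))"
        by (rule sum.cong) (auto simp: q_def)
      moreover have "(\<Sum>t\<in>Blk. (x t - q t) * (if q t = \<alpha> then 1 else 0)) =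
            (\<Sum>t\<in>Blk. (x t - v) * (if v = \<alpha> then 1 else 0))"
        by (rule sum.cong) (auto simp: q_def dest: blkout)
      moreover have "(\<Sum>t\<in>Blk. (x t - v) * (if v = \<alpha> then 1 else 0)) =
            ((\<Sum>t\<in>Blk. x t) - v * card Blk) * (if v = \<alpha> then 1 else 0)"
        by (simp add: sum_distrib_right sum_subtractf)
      ultimately show ?thesis using q'(2) splitS sx cB vden by simp
    qed
    have cost: "(\<Sum>t\<in>Sij i j. \<bar>p t - q t\<bar>) = Dv T x p i j"
    proof -
      have "(\<Sum>t\<in>Sij a b. \<bar>p t - q t\<bar>) = (\<Sum>t\<in>Sij a b. \<bar>p t - q' t\<bar>)"
        by (rule sum.cong) (auto simp: q_def)
      moreover have "(\<Sum>t\<in>Blk. \<bar>p t - q t\<bar>) = (\<Sum>t\<in>Blk. \<bar>p t - v\<bar>)"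
        by (rule sum.cong) (auto simp: q_def dest: blkout)
      moreover have "(\<Sum>t\<in>Blk. \<bar>p t - v\<bar>) = bc T x p a b i j"
      proof -
        have "Blk = {t\<in>{..<T}. inblk T x p a b i j t}" by (auto simp: Blk_def)
        then have "(\<Sum>t\<in>Blk. \<bar>p t - v\<bar>) = (\<Sum>t\<in>{..<T}. if inblk T x p a b i j t then \<bar>p t - v\<bar> else 0)"
          by (simp only: sum.inter_filter[OF finite_lessThan])
        then show ?thesis unfolding bc_def v_def .
      qed
      ultimately show ?thesis using splitS q'(3) ab(4) by simp
    qed
    have "\<forall>t. 0 \<le> q t \<and> q t \<le> 1" using q'(1) v01 by (simp add: q_def)
    then show ?thesis using cal cost by blast
  qed
qed

lemma Sij_all: "Sij n0 n1 = {..<T}"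
proof -
  have "t \<in> Sij n0 n1" if "t < T" for t
  proof (cases "x t = 0")
    case True
    then show ?thesis using rk_less_card[where t=t and T=T and x=x and c=0 and p=p, OF that True] that by (simp add: Sij_def)
  next
    case False
    then have "x t = 1" using x01 that by blast
    then show ?thesis using rk_less_card[where t=t and T=T and x=x and c=1 and p=p, OF that \<open>x t = 1\<close>] that False by (simp add: Sij_def)
  qed
  then show ?thesis by (auto simp: Sij_def)
qed

lemma upper: "\<exists>q\<in>calib_set T x. (\<Sum>t<T. \<bar>p t - q t\<bar>) = Dv T x p n0 n1"
proof -
  obtain q where q: "\<forall>t. 0 \<le> q t \<and> q t \<le> 1"
     "\<forall>\<alpha>. (\<Sum>t\<in>Sij n0 n1. (x t - q t) * (if q t = \<alpha> then 1 else 0)) = 0"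
     "(\<Sum>t\<in>Sij n0 n1. \<bar>p t - q t\<bar>) = Dv T x p n0 n1"
    using achieve[of n0 n1] by auto
  then show ?thesis unfolding Sij_all calib_set_def by auto
qed


lemma rank_down:
  assumes mono: "\<forall>s<T. \<forall>t<T. x s = x t \<longrightarrow> prec p s t \<longrightarrow> q s \<le> (q t :: real)"
    and down: "\<And>y y'. P y \<Longrightarrow> y' \<le> y \<Longrightarrow> P y'" and t: "t < T" "x t = c"
  shows "r t < card {s. s < T \<and> x s = c \<and> P (q s)} \<longleftrightarrow> P (q t)"
proof
  have rt: "r t = card {s. s < T \<and> x s = c \<and> prec p s t}" using t(2) by (simp add: rk_def)
  show "P (q t)" if h: "r t < card {s. s < T \<and> x s = c \<and> P (q s)}"
  proof (rule ccontr)
    assume np: "\<not> P (q t)"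
    have "{s. s < T \<and> x s = c \<and> P (q s)} \<subseteq> {s. s < T \<and> x s = c \<and> prec p s t}"
    proof
      fix s assume s: "s \<in> {s. s < T \<and> x s = c \<and> P (q s)}"
      then have "s \<noteq> t" using np by auto
      have "prec p s t"
      proof (rule ccontr)
        assume "\<not> prec p s t"
        then have "prec p t s" using prec_props(3)[OF \<open>s \<noteq> t\<close>] by blast
        then have "q t \<le> q s" using mono s t by auto
        then show False using down[of "q s" "q t"] s np by auto
      qed
      then show "s \<in> {s. s < T \<and> x s = c \<and> prec p s t}" using s by auto
    qed
    then have "card {s. s < T \<and> x s = c \<and> P (q s)} \<le> r t" unfolding rt by (intro card_mono) auto
    then show False using h by simp
  qed
  show "r t < card {s. s < T \<and> x s = c \<and> P (q s)}" if h: "P (q t)"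
  proof -
    have "{s. s < T \<and> x s = c \<and> prec p s t} \<subset> {s. s < T \<and> x s = c \<and> P (q s)}"
    proof
      show "{s. s < T \<and> x s = c \<and> prec p s t} \<subseteq> {s. s < T \<and> x s = c \<and> P (q s)}"
      proof
        fix s assume s: "s \<in> {s. s < T \<and> x s = c \<and> prec p s t}"
        then have "q s \<le> q t" using mono t by auto
        then show "s \<in> {s. s < T \<and> x s = c \<and> P (q s)}" using down[OF h] s by auto
      qed
      show "{s. s < T \<and> x s = c \<and> prec p s t} \<noteq> {s. s < T \<and> x s = c \<and> P (q s)}"
        using t h prec_props(1)[of p t] by blast
    qed
    then show ?thesis unfolding rt by (intro psubset_card_mono) auto
  qed
qed

lemma mono_lower:
  assumes q01: "\<forall>t<T. 0 \<le> q t \<and> q t \<le> 1"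
    and cal: "\<forall>\<alpha>. 0 \<le> \<alpha> \<and> \<alpha> \<le> 1 \<longrightarrow> (\<Sum>t<T. (x t - q t) * (if q t = \<alpha> then 1 else 0)) = 0"
    and mono: "\<forall>s<T. \<forall>t<T. x s = x t \<longrightarrow> prec p s t \<longrightarrow> q s \<le> q t"
  shows "Dv T x p n0 n1 \<le> (\<Sum>t<T. \<bar>p t - q t\<bar>)"
proof -
  have main: "Dv T x p (card {t. t < T \<and> x t = 0 \<and> q t \<le> \<beta>}) (card {t. t < T \<and> x t = 1 \<and> q t \<le> \<beta>})
     \<le> (\<Sum>t\<in>{t. t < T \<and> q t \<le> \<beta>}. \<bar>p t - q t\<bar>)" for \<beta>
  proof (induction "card (q ` {t. t < T \<and> q t \<le> \<beta>})" arbitrary: \<beta> rule: less_induct)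
    case less
    show ?case
    proof (cases "{t. t < T \<and> q t \<le> \<beta>} = {}")
      case True
      then have e: "{t. t < T \<and> x t = 0 \<and> q t \<le> \<beta>} = {}" "{t. t < T \<and> x t = 1 \<and> q t \<le> \<beta>} = {}" by auto
      show ?thesis by (simp only: e True) (simp add: Dv_00)
    next
      case False
      let ?L = "{t. t < T \<and> q t \<le> \<beta>}"
      define v where "v = Max (q ` ?L)"
      have finL: "finite ?L" by simp
      have "v \<in> q ` ?L" unfolding v_def using False finL by (intro Max_in) auto
      then obtain t0 where t0: "t0 < T" "q t0 = v" "v \<le> \<beta>" by auto
      have le_iff: "q t \<le> \<beta> \<longleftrightarrow> q t \<le> v" if "t < T" for t
      proof
        assume "q t \<le> \<beta>"
        then show "q t \<le> v" unfolding v_def using finL that by (intro Max_ge) auto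
      qed (use t0 in auto)
      let ?M = "{t. t < T \<and> q t < v}"
      have IHM: "Dv T x p (card {t. t < T \<and> x t = 0 \<and> q t < v}) (card {t. t < T \<and> x t = 1 \<and> q t < v})
         \<le> (\<Sum>t\<in>?M. \<bar>p t - q t\<bar>)"
      proof (cases "?M = {}")
        case True
        then have e: "{t. t < T \<and> x t = 0 \<and> q t < v} = {}" "{t. t < T \<and> x t = 1 \<and> q t < v} = {}" by auto
        show ?thesis by (simp only: e True) (simp add: Dv_00)
      next
        case False
        define v' where "v' = Max (q ` ?M)"
        have "v' \<in> q ` ?M" unfolding v'_def using False by (intro Max_in) auto
        then have v'v: "v' < v" by auto
        have lt_iff: "q t < v \<longleftrightarrow> q t \<le> v'" if "t < T" for t
        proof
          assume "q t < v"
          then show "q t \<le> v'" unfolding v'_def using that by (intro Max_ge) auto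
        qed (use v'v in auto)
        have Meq: "{t. t < T \<and> q t \<le> v'} = ?M" using lt_iff by auto
        have "q ` ?M \<subset> q ` ?L"
        proof
          show "q ` ?M \<subseteq> q ` ?L" using le_iff by auto
          show "q ` ?M \<noteq> q ` ?L"
          proof
            assume "q ` ?M = q ` ?L"
            then have "v \<in> q ` ?M" using \<open>v \<in> q ` ?L\<close> by simp
            then show False by auto
          qed
        qed
        then have "card (q ` {t. t < T \<and> q t \<le> v'}) < card (q ` ?L)"
          unfolding Meq by (intro psubset_card_mono) auto
        from less.hyps[OF this]
        have "Dv T x p (card {t. t < T \<and> x t = 0 \<and> q t \<le> v'}) (card {t. t < T \<and> x t = 1 \<and> q t \<le> v'})
          \<le> (\<Sum>t\<in>{t. t < T \<and> q t \<le> v'}. \<bar>p t - q t\<bar>)" .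
        moreover have "{t. t < T \<and> x t = 0 \<and> q t \<le> v'} = {t. t < T \<and> x t = 0 \<and> q t < v}"
          "{t. t < T \<and> x t = 1 \<and> q t \<le> v'} = {t. t < T \<and> x t = 1 \<and> q t < v}"
          using lt_iff by auto
        ultimately show ?thesis unfolding Meq by simp
      qed
      define a where "a = card {t. t < T \<and> x t = 0 \<and> q t < v}"
      define b where "b = card {t. t < T \<and> x t = 1 \<and> q t < v}"
      define i where "i = card {t. t < T \<and> x t = 0 \<and> q t \<le> v}"
      define j where "j = card {t. t < T \<and> x t = 1 \<and> q t \<le> v}"
      define N0 where "N0 = card {t. t < T \<and> x t = 0 \<and> q t = v}"
      define N1 where "N1 = card {t. t < T \<and> x t = 1 \<and> q t = v}"
      have sq0: "{t. t < T \<and> x t = 0 \<and> q t \<le> \<beta>} = {t. t < T \<and> x t = 0 \<and> q t \<le> v}" using le_iff by auto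
      have sq1: "{t. t < T \<and> x t = 1 \<and> q t \<le> \<beta>} = {t. t < T \<and> x t = 1 \<and> q t \<le> v}" using le_iff by auto
      have sqL: "?L = {t. t < T \<and> q t \<le> v}" using le_iff by auto
      have ai: "a \<le> i" unfolding a_def i_def by (intro card_mono) auto
      have bj: "b \<le> j" unfolding b_def j_def by (intro card_mono) auto
      have iaN: "i - a = N0"
      proof -
        have "{t. t < T \<and> x t = 0 \<and> q t \<le> v} - {t. t < T \<and> x t = 0 \<and> q t < v} = {t. t < T \<and> x t = 0 \<and> q t = v}"
          by auto
        moreover have "card ({t. t < T \<and> x t = 0 \<and> q t \<le> v} - {t. t < T \<and> x t = 0 \<and> q t < v}) =
          card {t. t < T \<and> x t = 0 \<and> q t \<le> v} - card {t. t < T \<and> x t = 0 \<and> q t < v}"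
          by (rule card_Diff_subset) auto
        ultimately show ?thesis unfolding i_def a_def N0_def by simp
      qed
      have jbN: "j - b = N1"
      proof -
        have "{t. t < T \<and> x t = 1 \<and> q t \<le> v} - {t. t < T \<and> x t = 1 \<and> q t < v} = {t. t < T \<and> x t = 1 \<and> q t = v}"
          by auto
        moreover have "card ({t. t < T \<and> x t = 1 \<and> q t \<le> v} - {t. t < T \<and> x t = 1 \<and> q t < v}) =
          card {t. t < T \<and> x t = 1 \<and> q t \<le> v} - card {t. t < T \<and> x t = 1 \<and> q t < v}"
          by (rule card_Diff_subset) auto
        ultimately show ?thesis unfolding j_def b_def N1_def by simp
      qed
      have Npos: "N0 + N1 > 0"
      proof (cases "x t0 = 0")
        case True
        then have "t0 \<in> {t. t < T \<and> x t = 0 \<and> q t = v}" using t0 by auto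
        then have "N0 > 0" unfolding N0_def by (auto simp: card_gt_0_iff)
        then show ?thesis by simp
      next
        case False
        then have "x t0 = 1" using x01 t0 by blast
        then have "t0 \<in> {t. t < T \<and> x t = 1 \<and> q t = v}" using t0 by auto
        then have "N1 > 0" unfolding N1_def by (auto simp: card_gt_0_iff)
        then show ?thesis by simp
      qed
      have abij: "(a, b) \<noteq> (i, j)" using iaN jbN Npos ai bj by auto
      have ij0: "(i, j) \<noteq> (0, 0)" using abij ai bj by auto
      have v01: "0 \<le> v \<and> v \<le> 1" using q01 t0 by auto
      have "(1 - v) * N1 - v * N0 = 0"
        using cal v01 calsum[of q v] unfolding N0_def N1_def by simp
      then have vN: "v * (N0 + N1) = N1" by (simp add: algebra_simps)
      have vl_eq: "vl a b i j = v"
      proof -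
        have "real N0 + real N1 > 0" using Npos by linarith
        then have "real N1 / (real N0 + real N1) = v" using vN by (simp add: divide_eq_eq algebra_simps)
        then show ?thesis unfolding vl_def iaN jbN by simp
      qed
      have inblk_iff: "inblk T x p a b i j t \<longleftrightarrow> q t = v" if "t < T" for t
      proof (cases "x t = 0")
        case True
        have A: "r t < a \<longleftrightarrow> q t < v" unfolding a_def
          using rank_down[OF mono, of "\<lambda>y. y < v", OF _ that True] by auto
        have B: "r t < i \<longleftrightarrow> q t \<le> v" unfolding i_def
          using rank_down[OF mono, of "\<lambda>y. y \<le> v", OF _ that True] by auto
        show ?thesis using A B True by (auto simp: inblk_def)
      next
        case False
        then have x1: "x t = 1" using x01 that by blast
        have A: "r t < b \<longleftrightarrow> q t < v" unfolding b_def
          using rank_down[OF mono, of "\<lambda>y. y < v", OF _ that x1] by auto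
        have B: "r t < j \<longleftrightarrow> q t \<le> v" unfolding j_def
          using rank_down[OF mono, of "\<lambda>y. y \<le> v", OF _ that x1] by auto
        show ?thesis using A B False by (auto simp: inblk_def)
      qed
      let ?E = "{t. t < T \<and> q t = v}"
      have bcE: "bc T x p a b i j = (\<Sum>t\<in>?E. \<bar>p t - q t\<bar>)"
      proof -
        have "bc T x p a b i j = (\<Sum>t<T. if q t = v then \<bar>p t - q t\<bar> else 0)"
          unfolding bc_def vl_eq by (rule sum.cong) (auto simp: inblk_iff)
        also have "\<dots> = (\<Sum>t\<in>{t\<in>{..<T}. q t = v}. \<bar>p t - q t\<bar>)"
          by (simp only: sum.inter_filter[OF finite_lessThan])
        also have "{t\<in>{..<T}. q t = v} = ?E" by auto
        finally show ?thesis .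
      qed
      have Dle: "Dv T x p i j \<le> Dv T x p a b + bc T x p a b i j"
        by (rule Dv_le[OF ij0 ai bj abij])
      have LME: "{t. t < T \<and> q t \<le> v} = ?M \<union> ?E" by auto
      have sumLE: "(\<Sum>t\<in>{t. t < T \<and> q t \<le> v}. \<bar>p t - q t\<bar>) = (\<Sum>t\<in>?M. \<bar>p t - q t\<bar>) + (\<Sum>t\<in>?E. \<bar>p t - q t\<bar>)"
        unfolding LME by (rule sum.union_disjoint) auto
      show ?thesis unfolding sq0 sq1 sqL sumLE
        using Dle IHM bcE unfolding a_def b_def i_def j_def by linarith
    qed
  qed
  have "{t. t < T \<and> x t = 0 \<and> q t \<le> 1} = {t. t < T \<and> x t = 0}"
       "{t. t < T \<and> x t = 1 \<and> q t \<le> 1} = {t. t < T \<and> x t = 1}"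
       "{t. t < T \<and> q t \<le> 1} = {..<T}" using q01 by auto
  then show ?thesis using main[of 1] by simp
qed


lemma lower:
  assumes q: "q \<in> calib_set T x"
  shows "Dv T x p n0 n1 \<le> (\<Sum>t<T. \<bar>p t - q t\<bar>)"
proof -
  have q01: "\<forall>t<T. 0 \<le> q t \<and> q t \<le> 1"
    and cal: "\<forall>\<alpha>. 0 \<le> \<alpha> \<and> \<alpha> \<le> 1 \<longrightarrow> (\<Sum>t<T. (x t - q t) * (if q t = \<alpha> then 1 else 0)) = 0"
    using q unfolding calib_set_def by auto
  have ex: "\<exists>w'. (\<forall>\<alpha>. card {t\<in>{t. t < T \<and> x t = c}. w' t = \<alpha>} = card {t\<in>{t. t < T \<and> x t = c}. q t = \<alpha>}) \<and>
     (\<Sum>t\<in>{t. t < T \<and> x t = c}. \<bar>p t - w' t\<bar>) \<le> (\<Sum>t\<in>{t. t < T \<and> x t = c}. \<bar>p t - q t\<bar>) \<and>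
     (\<forall>s\<in>{t. t < T \<and> x t = c}. \<forall>t\<in>{t. t < T \<and> x t = c}. prec p s t \<longrightarrow> w' s \<le> (w' t :: real))" for c
    by (rule monot) (auto simp: prec_def)
  obtain w0 where w0: "\<forall>\<alpha>. card {t\<in>{t. t < T \<and> x t = 0}. w0 t = \<alpha>} = card {t\<in>{t. t < T \<and> x t = 0}. q t = \<alpha>}"
     "(\<Sum>t\<in>{t. t < T \<and> x t = 0}. \<bar>p t - w0 t\<bar>) \<le> (\<Sum>t\<in>{t. t < T \<and> x t = 0}. \<bar>p t - q t\<bar>)"
     "\<forall>s\<in>{t. t < T \<and> x t = 0}. \<forall>t\<in>{t. t < T \<and> x t = 0}. prec p s t \<longrightarrow> w0 s \<le> w0 t"
    using ex[of 0] by blast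
  obtain w1 where w1: "\<forall>\<alpha>. card {t\<in>{t. t < T \<and> x t = 1}. w1 t = \<alpha>} = card {t\<in>{t. t < T \<and> x t = 1}. q t = \<alpha>}"
     "(\<Sum>t\<in>{t. t < T \<and> x t = 1}. \<bar>p t - w1 t\<bar>) \<le> (\<Sum>t\<in>{t. t < T \<and> x t = 1}. \<bar>p t - q t\<bar>)"
     "\<forall>s\<in>{t. t < T \<and> x t = 1}. \<forall>t\<in>{t. t < T \<and> x t = 1}. prec p s t \<longrightarrow> w1 s \<le> w1 t"
    using ex[of 1] by blast
  define qs where "qs t = (if x t = 0 then w0 t else w1 t)" for t
  have s0: "(\<Sum>t\<in>{t. t < T \<and> x t = 0}. \<bar>p t - qs t\<bar>) = (\<Sum>t\<in>{t. t < T \<and> x t = 0}. \<bar>p t - w0 t\<bar>)"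
    by (rule sum.cong) (auto simp: qs_def)
  have s1: "(\<Sum>t\<in>{t. t < T \<and> x t = 1}. \<bar>p t - qs t\<bar>) = (\<Sum>t\<in>{t. t < T \<and> x t = 1}. \<bar>p t - w1 t\<bar>)"
    by (rule sum.cong) (auto simp: qs_def)
  have cost: "(\<Sum>t<T. \<bar>p t - qs t\<bar>) \<le> (\<Sum>t<T. \<bar>p t - q t\<bar>)"
    unfolding sum_split01[of "\<lambda>t. \<bar>p t - qs t\<bar>"] sum_split01[of "\<lambda>t. \<bar>p t - q t\<bar>"] s0 s1
    using w0(2) w1(2) by linarith
  have c0: "card {t. t < T \<and> x t = 0 \<and> qs t = \<alpha>} = card {t. t < T \<and> x t = 0 \<and> q t = \<alpha>}" for \<alpha>
  proof -
    have "{t. t < T \<and> x t = 0 \<and> qs t = \<alpha>} = {t\<in>{t. t < T \<and> x t = 0}. w0 t = \<alpha>}" by (auto simp: qs_def)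
    moreover have "{t. t < T \<and> x t = 0 \<and> q t = \<alpha>} = {t\<in>{t. t < T \<and> x t = 0}. q t = \<alpha>}" by auto
    ultimately show ?thesis using w0(1) by simp
  qed
  have c1: "card {t. t < T \<and> x t = 1 \<and> qs t = \<alpha>} = card {t. t < T \<and> x t = 1 \<and> q t = \<alpha>}" for \<alpha>
  proof -
    have "{t. t < T \<and> x t = 1 \<and> qs t = \<alpha>} = {t\<in>{t. t < T \<and> x t = 1}. w1 t = \<alpha>}" by (auto simp: qs_def)
    moreover have "{t. t < T \<and> x t = 1 \<and> q t = \<alpha>} = {t\<in>{t. t < T \<and> x t = 1}. q t = \<alpha>}" by auto
    ultimately show ?thesis using w1(1) by simp
  qed
  have qs01: "\<forall>t<T. 0 \<le> qs t \<and> qs t \<le> 1"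
  proof (intro allI impI)
    fix t assume t: "t < T"
    have "\<exists>u<T. q u = qs t"
    proof (cases "x t = 0")
      case True
      then have "t \<in> {t. t < T \<and> x t = 0 \<and> qs t = qs t}" using t by simp
      then have "card {t'. t' < T \<and> x t' = 0 \<and> qs t' = qs t} > 0" by (auto simp: card_gt_0_iff)
      then have "card {t'. t' < T \<and> x t' = 0 \<and> q t' = qs t} > 0" using c0 by simp
      then show ?thesis by (auto simp: card_gt_0_iff)
    next
      case False
      then have "x t = 1" using x01 t by blast
      then have "t \<in> {t. t < T \<and> x t = 1 \<and> qs t = qs t}" using t by simp
      then have "card {t'. t' < T \<and> x t' = 1 \<and> qs t' = qs t} > 0" by (auto simp: card_gt_0_iff)
      then have "card {t'. t' < T \<and> x t' = 1 \<and> q t' = qs t} > 0" using c1 by simp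
      then show ?thesis by (auto simp: card_gt_0_iff)
    qed
    then show "0 \<le> qs t \<and> qs t \<le> 1" using q01 by auto
  qed
  have qscal: "\<forall>\<alpha>. 0 \<le> \<alpha> \<and> \<alpha> \<le> 1 \<longrightarrow> (\<Sum>t<T. (x t - qs t) * (if qs t = \<alpha> then 1 else 0)) = 0"
    using cal unfolding calsum c0 c1 by simp
  have qsmono: "\<forall>s<T. \<forall>t<T. x s = x t \<longrightarrow> prec p s t \<longrightarrow> qs s \<le> qs t"
  proof (intro allI impI)
    fix s t assume st: "s < T" "t < T" "x s = x t" "prec p s t"
    show "qs s \<le> qs t"
    proof (cases "x t = 0")
      case True
      then show ?thesis using w0(3) st by (auto simp: qs_def)
    next
      case False
      then have "x t = 1" using x01 st by blast
      then show ?thesis using w1(3) st False by (auto simp: qs_def)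
    qed
  qed
  have "Dv T x p n0 n1 \<le> (\<Sum>t<T. \<bar>p t - qs t\<bar>)" by (rule mono_lower[OF qs01 qscal qsmono])
  then show ?thesis using cost by linarith
qed

theorem CalDist_eq: "CalDist T x p = Dv T x p n0 n1"
proof -
  obtain q0 where q0: "q0 \<in> calib_set T x" "(\<Sum>t<T. \<bar>p t - q0 t\<bar>) = Dv T x p n0 n1"
    using upper by blast
  show ?thesis unfolding CalDist_def
  proof (rule cInf_eq_minimum)
    show "Dv T x p n0 n1 \<in> {\<Sum>t<T. \<bar>p t - q t\<bar> |q. q \<in> calib_set T x}"
      using q0 by (intro CollectI exI[of _ q0]) simp
    show "\<And>y. y \<in> {\<Sum>t<T. \<bar>p t - q t\<bar> |q. q \<in> calib_set T x} \<Longrightarrow> Dv T x p n0 n1 \<le> y"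
      using lower by auto
  qed
qed

end


definition htc :: "(state \<Rightarrow> bool) \<Rightarrow> com \<Rightarrow> (state \<Rightarrow> bool) \<Rightarrow> nat \<Rightarrow> bool" where
  "htc P c Q B \<longleftrightarrow> (\<forall>s. P s \<longrightarrow> (\<exists>n s'. exec c s n s' \<and> n \<le> B \<and> Q s'))"

lemma wp_skip: "htc Q Skip Q 1"
  unfolding htc_def
proof (intro allI impI)
  fix s assume "Q s"
  then show "\<exists>n s'. exec Skip s n s' \<and> n \<le> 1 \<and> Q s'" using exec.intros(1)[of s] by (metis le_refl)
qed

lemma wp_nstore: "htc (\<lambda>s. Q ((fst s)(neval a s := neval e s), snd s)) (NStore a e) Q 1"
  unfolding htc_def
proof (intro allI impI)
  fix s assume "Q ((fst s)(neval a s := neval e s), snd s)"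
  then show "\<exists>n s'. exec (NStore a e) s n s' \<and> n \<le> 1 \<and> Q s'" using exec.intros(2)[of a e s] by (metis le_refl)
qed

lemma wp_rstore: "htc (\<lambda>s. Q (fst s, (snd s)(neval a s := reval e s))) (RStore a e) Q 1"
  unfolding htc_def
proof (intro allI impI)
  fix s assume "Q (fst s, (snd s)(neval a s := reval e s))"
  then show "\<exists>n s'. exec (RStore a e) s n s' \<and> n \<le> 1 \<and> Q s'" using exec.intros(3)[of a e s] by (metis le_refl)
qed

lemma wp_seq: "htc R c2 Q B2 \<Longrightarrow> htc P c1 R B1 \<Longrightarrow> htc P (Seq c1 c2) Q (B1 + B2)"
  unfolding htc_def by (meson add_mono exec.intros(4))

lemma wp_if: "htc P1 c1 Q B1 \<Longrightarrow> htc P2 c2 Q B2 \<Longrightarrow>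
  htc (\<lambda>s. (beval b s \<longrightarrow> P1 s) \<and> (\<not> beval b s \<longrightarrow> P2 s)) (If b c1 c2) Q (Suc (max B1 B2))"
  unfolding htc_def
proof (intro allI impI)
  fix s assume h1: "\<forall>s. P1 s \<longrightarrow> (\<exists>n s'. exec c1 s n s' \<and> n \<le> B1 \<and> Q s')"
    and h2: "\<forall>s. P2 s \<longrightarrow> (\<exists>n s'. exec c2 s n s' \<and> n \<le> B2 \<and> Q s')"
    and p: "(beval b s \<longrightarrow> P1 s) \<and> (\<not> beval b s \<longrightarrow> P2 s)"
  show "\<exists>n s'. exec (com.If b c1 c2) s n s' \<and> n \<le> Suc (max B1 B2) \<and> Q s'"
  proof (cases "beval b s")
    case True
    then obtain n s' where "exec c1 s n s'" "n \<le> B1" "Q s'" using h1 p by blast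
    then show ?thesis using True by (intro exI[of _ "Suc n"] exI[of _ s']) (auto intro: exec.intros)
  next
    case False
    then obtain n s' where "exec c2 s n s'" "n \<le> B2" "Q s'" using h2 p by blast
    then show ?thesis using False by (intro exI[of _ "Suc n"] exI[of _ s']) (auto intro: exec.intros)
  qed
qed

lemma htc_pre: "htc P' c Q B' \<Longrightarrow> (\<And>s. P s \<Longrightarrow> P' s) \<Longrightarrow> B' \<le> B \<Longrightarrow> htc P c Q B"
  unfolding htc_def by (meson order_trans)

lemma htc_post: "htc P c Q' B \<Longrightarrow> (\<And>s. Q' s \<Longrightarrow> Q s) \<Longrightarrow> htc P c Q B"
  unfolding htc_def by blast

lemma wp_call: "(\<And>u. htc (P u) c (Q' u) B) \<Longrightarrow> (\<And>u s. Q' u s \<Longrightarrow> Q s) \<Longrightarrow>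
   htc (\<lambda>s. \<exists>u. P u s) c Q B"
  unfolding htc_def by blast

lemma htc_while:
  assumes "\<And>k s. k < N \<Longrightarrow> I k s \<Longrightarrow> beval b s" "\<And>s. I N s \<Longrightarrow> \<not> beval b s"
    "\<And>k. k < N \<Longrightarrow> htc (I k) c (I (Suc k)) B"
  shows "k \<le> N \<Longrightarrow> htc (I k) (While b c) (I N) ((N - k) * (B + 1) + 1)"
proof (induction "N - k" arbitrary: k)
  case 0
  then have "k = N" by simp
  show ?case unfolding htc_def
  proof (intro allI impI)
    fix s assume "I k s"
    then have "\<not> beval b s" using assms(2) \<open>k = N\<close> by blast
    then have "exec (While b c) s 1 s" by (rule exec.intros(7))
    then show "\<exists>n s'. exec (While b c) s n s' \<and> n \<le> (N - k) * (B + 1) + 1 \<and> I N s'"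
      using \<open>I k s\<close> \<open>k = N\<close> by fastforce
  qed
next
  case (Suc m)
  then have kN: "k < N" and m: "m = N - Suc k" by auto
  have IH: "htc (I (Suc k)) (While b c) (I N) ((N - Suc k) * (B + 1) + 1)"
    using Suc.hyps(1)[OF m] kN by simp
  show ?case unfolding htc_def
  proof (intro allI impI)
    fix s assume "I k s"
    then have bs: "beval b s" using assms(1) kN by blast
    obtain n1 s1 where 1: "exec c s n1 s1" "n1 \<le> B" "I (Suc k) s1"
      using assms(3)[OF kN] \<open>I k s\<close> unfolding htc_def by blast
    obtain n2 s2 where 2: "exec (While b c) s1 n2 s2" "n2 \<le> (N - Suc k) * (B + 1) + 1" "I N s2"
      using IH 1(3) unfolding htc_def by blast
    have "exec (While b c) s (Suc (n1 + n2)) s2" by (rule exec.intros(8)[OF bs 1(1) 2(1)])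
    moreover have "Suc (n1 + n2) \<le> (N - k) * (B + 1) + 1"
    proof -
      have "N - k = Suc (N - Suc k)" using kN by simp
      then have "(N - k) * (B + 1) + 1 = (B + 1) + ((N - Suc k) * (B + 1) + 1)" by simp
      then show ?thesis using 1(2) 2(2) by linarith
    qed
    ultimately show "\<exists>n s'. exec (While b c) s n s' \<and> n \<le> (N - k) * (B + 1) + 1 \<and> I N s'"
      using 2(3) by blast
  qed
qed

lemma htc_while0:
  assumes "\<And>k s. k < N \<Longrightarrow> I k s \<Longrightarrow> beval b s" "\<And>s. I N s \<Longrightarrow> \<not> beval b s"
    "\<And>k. k < N \<Longrightarrow> htc (I k) c (I (Suc k)) B" "N \<le> M"
  shows "htc (I 0) (While b c) (I N) (M * (B + 1) + 1)"
  apply (rule htc_pre[OF htc_while[where I=I and N=N and b=b and c=c and B=B and k=0, OF assms(1-3)]])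
  using assms(4) by (auto intro!: add_mono mult_right_mono)


abbreviation NR :: "nat \<Rightarrow> nexp" where "NR k \<equiv> NLoad (NConst k)"
abbreviation TN :: nexp where "TN \<equiv> NR 0"
abbreviation XA :: "nexp \<Rightarrow> rexp" where "XA e \<equiv> RLoad (NAdd (NConst 1) e)"
abbreviation PA :: "nexp \<Rightarrow> rexp" where "PA e \<equiv> RLoad (NAdd (NAdd (NConst 1) TN) e)"
abbreviation BOr :: "bexp \<Rightarrow> bexp \<Rightarrow> bexp" where "BOr a b \<equiv> BNot (BAnd (BNot a) (BNot b))"
abbreviation REq :: "rexp \<Rightarrow> rexp \<Rightarrow> bexp" where "REq a b \<equiv> BAnd (BNot (RLess a b)) (BNot (RLess b a))"
abbreviation NEq :: "nexp \<Rightarrow> nexp \<Rightarrow> bexp" where "NEq a b \<equiv> BAnd (BNot (NLess a b)) (BNot (NLess b a))"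
abbreviation NLe :: "nexp \<Rightarrow> nexp \<Rightarrow> bexp" where "NLe a b \<equiv> BNot (NLess b a)"
abbreviation incr :: "nat \<Rightarrow> com" where "incr k \<equiv> NStore (NConst k) (NAdd (NR k) (NConst 1))"
abbreviation setn :: "nat \<Rightarrow> nat \<Rightarrow> com" where "setn k v \<equiv> NStore (NConst k) (NConst v)"
abbreviation RKA :: "nexp \<Rightarrow> nexp" where "RKA e \<equiv> NAdd (NConst 20) e"

definition rank_cond :: bexp where
  "rank_cond = BAnd (REq (XA (NR 2)) (XA (NR 12)))
      (BOr (RLess (PA (NR 2)) (PA (NR 12))) (BAnd (REq (PA (NR 2)) (PA (NR 12))) (NLess (NR 2) (NR 12))))"

definition rank_inner_body :: com where
  "rank_inner_body = Seq (If rank_cond (incr 3) Skip) (incr 2)"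

definition rank_inner :: com where
  "rank_inner = While (NLess (NR 2) TN) rank_inner_body"

definition rank_body :: com where
  "rank_body = Seq (setn 3 0) (Seq (setn 2 0) (Seq rank_inner (Seq (NStore (RKA (NR 12)) (NR 3)) (incr 12))))"

definition phase1 :: com where
  "phase1 = Seq (setn 12 0) (While (NLess (NR 12) TN) rank_body)"

definition cnt_body :: com where
  "cnt_body = Seq (If (RLess (XA (NR 12)) (RNat (NConst 1))) (incr 10) Skip) (incr 12)"

definition phase2 :: com where
  "phase2 = Seq (setn 10 0) (Seq (setn 12 0) (While (NLess (NR 12) TN) cnt_body))"

lemma card_Suc_filter: "card {v. v < Suc k \<and> P v} = card {v. v < k \<and> P v} + (if P k then 1 else 0)"
proof (cases "P k")
  case True
  then have "{v. v < Suc k \<and> P v} = insert k {v. v < k \<and> P v}" by (auto simp: less_Suc_eq)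
  then show ?thesis using True by simp
next
  case False
  then have "{v. v < Suc k \<and> P v} = {v. v < k \<and> P v}" by (auto simp: less_Suc_eq)
  then show ?thesis using False by simp
qed

locale prg = cdl +
  assumes Tpos: "0 < T"
begin

definition inp :: "state \<Rightarrow> bool" where
  "inp s \<longleftrightarrow> fst s 0 = T \<and> (\<forall>u<T. snd s (Suc u) = x u \<and> snd s (Suc (T + u)) = p u)"

lemma inp_T: "inp s \<Longrightarrow> fst s 0 = T" by (simp add: inp_def)
lemma inp_x: "inp s \<Longrightarrow> u < T \<Longrightarrow> snd s (Suc u) = x u" by (simp add: inp_def)
lemma inp_p: "inp s \<Longrightarrow> u < T \<Longrightarrow> snd s (Suc (T + u)) = p u" by (simp add: inp_def)
lemma inp_nupd: "k \<noteq> 0 \<Longrightarrow> inp (f(k := v), g) = inp (f, g)" by (simp add: inp_def)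
lemma inp_rupd:
  assumes h: "2 * T < k \<or> k = 0"
  shows "inp (f, g(k := v)) = inp (f, g)"
proof -
  have e: "(g(k := v)) (Suc u) = g (Suc u) \<and> (g(k := v)) (Suc (T + u)) = g (Suc (T + u))" if "u < T" for u
  proof -
    have a1: "Suc u \<noteq> k" using h that by auto
    have a2: "Suc (T + u) \<noteq> k" using h that by auto
    show ?thesis using a1 a2 by simp
  qed
  show ?thesis unfolding inp_def fst_conv snd_conv using e by simp
qed

lemma rank_cond_eval: "inp s \<Longrightarrow> fst s 12 < T \<Longrightarrow> fst s 2 < T \<Longrightarrow>
  beval rank_cond s \<longleftrightarrow> x (fst s 2) = x (fst s 12) \<and> prec p (fst s 2) (fst s 12)"
  unfolding rank_cond_def prec_def by (auto simp: inp_x inp_p inp_T)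

definition I2 :: "nat \<Rightarrow> nat \<Rightarrow> state \<Rightarrow> bool" where
  "I2 t k s \<longleftrightarrow> inp s \<and> fst s 12 = t \<and> (\<forall>u<t. fst s (20 + u) = r u) \<and> fst s 2 = k \<and>
     fst s 3 = card {v. v < k \<and> x v = x t \<and> prec p v t}"

lemma rank_inner_body_ok: "t < T \<Longrightarrow> k < T \<Longrightarrow> htc (I2 t k) rank_inner_body (I2 t (Suc k)) 3"
  unfolding rank_inner_body_def
  apply (rule htc_pre)
    apply (rule wp_seq wp_if wp_nstore wp_skip wp_rstore)+
   apply (auto simp: I2_def inp_nupd rank_cond_eval card_Suc_filter)
  done

lemma htc_while0b:
  assumes "\<And>k s. k < N \<Longrightarrow> I k s \<Longrightarrow> beval b s" "\<And>s. I N s \<Longrightarrow> \<not> beval b s"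
    "\<And>k. k < N \<Longrightarrow> htc (I k) c (I (Suc k)) B" "N \<le> M" "M * (B + 1) + 1 \<le> Bw"
  shows "htc (I 0) (While b c) (I N) Bw"
  apply (rule htc_pre[OF htc_while0[where I=I and N=N and b=b and c=c and B=B and M=M]])
  using assms by auto

lemma rank_inner_ok: "t < T \<Longrightarrow> htc (I2 t 0) rank_inner (I2 t T) (T * 4 + 1)"
  unfolding rank_inner_def
  apply (rule htc_while0b[where M=T and B=3 and I="I2 t"])
  subgoal by (auto simp: I2_def inp_T)
  subgoal by (auto simp: I2_def inp_T)
  subgoal by (rule rank_inner_body_ok) auto
  by auto



lemma wp_useq: "htc P c Q' B \<Longrightarrow> htc (\<lambda>s. P s \<and> (\<forall>s'. Q' s' \<longrightarrow> Q s')) c Q B"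
  unfolding htc_def by blast

lemma wp_callc: "(\<And>u. C u \<Longrightarrow> htc (P u) c (Q' u) B) \<Longrightarrow>
   htc (\<lambda>s. \<exists>u. C u \<and> P u s \<and> (\<forall>s'. Q' u s' \<longrightarrow> Q s')) c Q B"
  unfolding htc_def by blast

lemma rank_inner_call: "htc (\<lambda>s. \<exists>t. t < T \<and> I2 t 0 s \<and> (\<forall>s'. I2 t T s' \<longrightarrow> Q s')) rank_inner Q (T * 4 + 1)"
  by (rule wp_callc[where C="\<lambda>t. t < T"], rule rank_inner_ok)

definition I1 :: "nat \<Rightarrow> state \<Rightarrow> bool" where
  "I1 k s \<longleftrightarrow> inp s \<and> fst s 12 = k \<and> (\<forall>u<k. fst s (20 + u) = r u)"

lemma rank_body_ok: "k < T \<Longrightarrow> htc (I1 k) rank_body (I1 (Suc k)) (T * 4 + 5)"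
  unfolding rank_body_def
  apply (rule htc_pre)
    apply (rule wp_seq wp_if wp_nstore wp_skip wp_rstore rank_inner_call)+
   apply (auto simp: I1_def I2_def inp_nupd less_Suc_eq rk_def)
  done

lemma phase1_ok: "htc inp phase1 (\<lambda>s. I1 T s) (T * (T * 4 + 6) + 2)"
proof -
  have loop: "htc (I1 0) (While (NLess (NR 12) TN) rank_body) (I1 T) (T * (T * 4 + 6) + 1)"
    apply (rule htc_while0b[where M=T and B="T * 4 + 5" and I="I1"])
    subgoal by (auto simp: I1_def inp_T)
    subgoal by (auto simp: I1_def inp_T)
    subgoal by (rule rank_body_ok) auto
    by auto
  show ?thesis unfolding phase1_def
    apply (rule htc_pre)
      apply (rule wp_seq wp_nstore wp_useq[OF loop])+
    by (auto simp: I1_def inp_nupd)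
qed

definition rks :: "state \<Rightarrow> bool" where
  "rks s \<longleftrightarrow> (\<forall>u<T. fst s (20 + u) = r u)"

definition I3 :: "nat \<Rightarrow> state \<Rightarrow> bool" where
  "I3 k s \<longleftrightarrow> inp s \<and> rks s \<and> fst s 12 = k \<and> fst s 10 = card {v. v < k \<and> x v = 0}"

lemma x_less1: "t < T \<Longrightarrow> x t < 1 \<longleftrightarrow> x t = 0"
  using x01[of t] by auto

lemma cnt_body_ok: "k < T \<Longrightarrow> htc (I3 k) cnt_body (I3 (Suc k)) 3"
  unfolding cnt_body_def
  apply (rule htc_pre)
    apply (rule wp_seq wp_if wp_nstore wp_skip wp_rstore)+
   apply (auto simp: I3_def rks_def inp_nupd inp_x x_less1 card_Suc_filter)
  done

lemma phase2_ok: "htc (\<lambda>s. I1 T s) phase2 (\<lambda>s. inp s \<and> rks s \<and> fst s 10 = n0) (T * 4 + 3)"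
proof -
  have loop: "htc (I3 0) (While (NLess (NR 12) TN) cnt_body) (I3 T) (T * 4 + 1)"
    apply (rule htc_while0b[where M=T and B="3" and I="I3"])
    subgoal by (auto simp: I3_def inp_T)
    subgoal by (auto simp: I3_def inp_T)
    subgoal by (rule cnt_body_ok) auto
    by auto
  show ?thesis unfolding phase2_def
    apply (rule htc_pre)
      apply (rule wp_seq wp_nstore wp_useq[OF loop])+
    by (auto simp: I1_def I3_def rks_def inp_nupd)
qed

end


definition VAe :: nexp where "VAe = NAdd (NAdd TN TN) (NConst 1)"
definition SAe :: nexp where "SAe = NAdd (NAdd TN TN) (NConst 2)"
definition MAe :: nexp where "MAe = NAdd (NAdd TN TN) (NConst 3)"
definition DAe :: "nexp \<Rightarrow> nexp" where "DAe e = NAdd (NAdd (NAdd TN TN) (NConst 4)) e"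

definition inb :: bexp where
  "inb = BOr (BAnd (RLess (XA (NR 12)) (RNat (NConst 1))) (BAnd (NLe (NR 6) (NLoad (RKA (NR 12)))) (NLess (NLoad (RKA (NR 12))) (NR 4))))
            (BAnd (BNot (RLess (XA (NR 12)) (RNat (NConst 1)))) (BAnd (NLe (NR 7) (NLoad (RKA (NR 12)))) (NLess (NLoad (RKA (NR 12))) (NR 5))))"

definition cost_body :: com where
  "cost_body = Seq (If inb (If (RLess (PA (NR 12)) (RLoad VAe))
                              (RStore SAe (RAdd (RLoad SAe) (RSub (RLoad VAe) (PA (NR 12)))))
                              (RStore SAe (RAdd (RLoad SAe) (RSub (PA (NR 12)) (RLoad VAe))))) Skip) (incr 12)"

definition costloop :: com where
  "costloop = Seq (RStore SAe (RLoad (DAe (NAdd (NR 9) (NR 7))))) (Seq (setn 12 0) (While (NLess (NR 12) TN) cost_body))"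

context prg
begin

definition vA :: nat where "vA = T + T + 1"
definition sA :: nat where "sA = T + T + 2"
definition mA :: nat where "mA = T + T + 3"
definition Db :: nat where "Db = T + T + 4"
definition L :: nat where "L = T + 1"

lemma addr_neq [simp]:
  "vA \<noteq> sA" "sA \<noteq> vA" "vA \<noteq> mA" "mA \<noteq> vA" "sA \<noteq> mA" "mA \<noteq> sA"
  "vA \<noteq> 0" "sA \<noteq> 0" "mA \<noteq> 0"
  "Db + n \<noteq> vA" "Db + n \<noteq> sA" "Db + n \<noteq> mA" "Db + n \<noteq> 0"
  "vA \<noteq> Db + n" "sA \<noteq> Db + n" "mA \<noteq> Db + n" "0 \<noteq> Db + n"
  by (auto simp: vA_def sA_def mA_def Db_def)

lemma neval_addr:
  "inp s \<Longrightarrow> neval VAe s = vA" "inp s \<Longrightarrow> neval SAe s = sA" "inp s \<Longrightarrow> neval MAe s = mA"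
  "inp s \<Longrightarrow> neval (DAe e) s = Db + neval e s"
  by (auto simp: VAe_def SAe_def MAe_def DAe_def vA_def sA_def mA_def Db_def inp_T)

lemma inp_tmp:
  "inp (f, g(vA := v)) = inp (f, g)" "inp (f, g(sA := v)) = inp (f, g)" "inp (f, g(mA := v)) = inp (f, g)"
  by (rule inp_rupd, simp add: vA_def sA_def mA_def)+

definition tab :: "nat \<Rightarrow> nat \<Rightarrow> state \<Rightarrow> bool" where
  "tab i j s \<longleftrightarrow> (\<forall>a b. b \<le> T \<longrightarrow> (a < i \<or> (a = i \<and> b < j)) \<longrightarrow> snd s (Db + (a * L + b)) = Dv T x p a b)"

definition outp :: "nat \<Rightarrow> nat \<Rightarrow> state \<Rightarrow> bool" where
  "outp i j s \<longleftrightarrow> ((n0 < i \<or> (n0 = i \<and> n1 < j)) \<longrightarrow> snd s 0 = Dv T x p n0 n1)"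

definition ctx :: "nat \<Rightarrow> nat \<Rightarrow> state \<Rightarrow> bool" where
  "ctx i j s \<longleftrightarrow> inp s \<and> rks s \<and> fst s 10 = n0 \<and> fst s 4 = i \<and> fst s 5 = j \<and> fst s 8 = i * L
      \<and> tab i j s \<and> outp i j s"

lemma ctx_nupd: "k \<noteq> 0 \<Longrightarrow> k \<noteq> 4 \<Longrightarrow> k \<noteq> 5 \<Longrightarrow> k \<noteq> 8 \<Longrightarrow> k \<noteq> 10 \<Longrightarrow> k < 20 \<Longrightarrow>
  ctx i j (f(k := v), g) = ctx i j (f, g)"
  by (simp add: ctx_def inp_nupd rks_def tab_def outp_def)

lemma ctx_tmp:
  "ctx i j (f, g(vA := v)) = ctx i j (f, g)" "ctx i j (f, g(sA := v)) = ctx i j (f, g)"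
  "ctx i j (f, g(mA := v)) = ctx i j (f, g)"
  by (simp_all add: ctx_def inp_tmp rks_def tab_def outp_def)

lemma ctx_inp: "ctx i j s \<Longrightarrow> inp s" by (simp add: ctx_def)
lemma ctx_regs: "ctx i j s \<Longrightarrow> fst s 0 = T \<and> fst s 4 = i \<and> fst s 5 = j \<and> fst s 10 = n0 \<and> fst s 8 = i * L"
  by (simp add: ctx_def inp_T)
lemma ctx_rks: "ctx i j s \<Longrightarrow> rks s" by (simp add: ctx_def)

lemma inb_eval: "inp s \<Longrightarrow> rks s \<Longrightarrow> fst s 12 < T \<Longrightarrow>
  beval inb s \<longleftrightarrow> inblk T x p (fst s 6) (fst s 7) (fst s 4) (fst s 5) (fst s 12)"
  unfolding inb_def inblk_def rks_def by (auto simp: inp_x x_less1)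

definition K0 :: "nat \<Rightarrow> nat \<Rightarrow> nat \<Rightarrow> nat \<Rightarrow> state \<Rightarrow> bool" where
  "K0 i j a b s \<longleftrightarrow> ctx i j s \<and> fst s 6 = a \<and> fst s 7 = b \<and> fst s 9 = a * L \<and>
     a \<le> i \<and> b \<le> j \<and> j \<le> T \<and> (a, b) \<noteq> (i, j) \<and> snd s vA = vl a b i j"

definition J5 :: "nat \<Rightarrow> nat \<Rightarrow> nat \<Rightarrow> nat \<Rightarrow> nat \<Rightarrow> real \<Rightarrow> nat \<Rightarrow> state \<Rightarrow> bool" where
  "J5 i j a b fl m k s \<longleftrightarrow> K0 i j a b s \<and> fst s 11 = fl \<and> snd s mA = m \<and> fst s 12 = k \<and>
     snd s sA = Dv T x p a b + (\<Sum>u<k. if inblk T x p a b i j u then \<bar>p u - vl a b i j\<bar> else 0)"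

lemma cost_body_ok: "k < T \<Longrightarrow> htc (J5 i j a b fl m k) cost_body (J5 i j a b fl m (Suc k)) 4"
  unfolding cost_body_def
  apply (rule htc_pre)
    apply (rule wp_seq wp_if wp_nstore wp_skip wp_rstore)+
  subgoal for s
    using ctx_inp[of i j s] ctx_rks[of i j s] ctx_regs[of i j s]
    by (auto simp: J5_def K0_def ctx_nupd ctx_tmp inb_eval neval_addr inp_p abs_if)
  by simp


lemma tab_read: "tab i j s \<Longrightarrow> b \<le> T \<Longrightarrow> a \<le> i \<Longrightarrow> b \<le> j \<Longrightarrow> (a, b) \<noteq> (i, j) \<Longrightarrow>
  snd s (Db + (a * L + b)) = Dv T x p a b"
  unfolding tab_def by (metis le_neq_implies_less)

lemma ctx_tab: "ctx i j s \<Longrightarrow> tab i j s" by (simp add: ctx_def)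

lemma costloop_ok: "htc (\<lambda>s. K0 i j a b s \<and> fst s 11 = fl \<and> snd s mA = m) costloop
   (\<lambda>s. K0 i j a b s \<and> fst s 11 = fl \<and> snd s mA = m \<and> snd s sA = Dv T x p a b + bc T x p a b i j) (T * 5 + 3)"
proof -
  have loop: "htc (J5 i j a b fl m 0) (While (NLess (NR 12) TN) cost_body) (J5 i j a b fl m T) (T * 5 + 1)"
    apply (rule htc_while0b[where M=T and B=4 and I="J5 i j a b fl m"])
    subgoal for k s using ctx_regs[of i j s] by (auto simp: J5_def K0_def)
    subgoal for s using ctx_regs[of i j s] by (auto simp: J5_def K0_def)
    subgoal by (rule cost_body_ok) auto
    by auto
  show ?thesis unfolding costloop_def
    apply (rule htc_pre)
      apply (rule wp_seq wp_nstore wp_rstore wp_useq[OF loop])+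
    subgoal for s
      using ctx_inp[of i j s] ctx_regs[of i j s] ctx_tab[of i j s] tab_read[of i j s b a]
      by (auto simp: J5_def K0_def ctx_nupd ctx_tmp neval_addr bc_def)
    by simp
qed

lemma costloop_call: "htc (\<lambda>s. \<exists>fl m. K0 i j a b s \<and> fst s 11 = fl \<and> snd s mA = m \<and>
    (\<forall>s'. K0 i j a b s' \<and> fst s' 11 = fl \<and> snd s' mA = m \<and> snd s' sA = Dv T x p a b + bc T x p a b i j \<longrightarrow> Q s'))
   costloop Q (T * 5 + 3)"
  unfolding htc_def using costloop_ok[of i j a b] unfolding htc_def by blast

definition proc :: "nat \<Rightarrow> nat \<Rightarrow> nat \<Rightarrow> (nat \<times> nat) set" where
  "proc j a k = {ab. fst ab < a \<and> snd ab \<le> j \<or> fst ab = a \<and> snd ab < k}"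

definition vals :: "nat \<Rightarrow> nat \<Rightarrow> (nat \<times> nat) set \<Rightarrow> real set" where
  "vals i j P = (\<lambda>ab. Dv T x p (fst ab) (snd ab) + bc T x p (fst ab) (snd ab) i j) ` (P \<inter> preds i j)"

definition mst :: "nat \<Rightarrow> nat \<Rightarrow> nat \<Rightarrow> nat \<Rightarrow> nat \<Rightarrow> real \<Rightarrow> bool" where
  "mst i j a k fl m \<longleftrightarrow> (vals i j (proc j a k) = {} \<and> fl = 0) \<or>
     (vals i j (proc j a k) \<noteq> {} \<and> fl = 1 \<and> m = Min (vals i j (proc j a k)))"

lemma finite_vals: "finite (vals i j P)"
  unfolding vals_def using finite_preds by auto

lemma vals_skip: "(a, k) \<notin> preds i j \<Longrightarrow> vals i j (proc j a (Suc k)) = vals i j (proc j a k)"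
proof -
  assume h: "(a, k) \<notin> preds i j"
  have "proc j a (Suc k) \<inter> preds i j = proc j a k \<inter> preds i j"
    using h by (auto simp: proc_def less_Suc_eq)
  then show ?thesis by (simp add: vals_def)
qed

lemma vals_ins: "(a, k) \<in> preds i j \<Longrightarrow> vals i j (proc j a (Suc k)) =
   insert (Dv T x p a k + bc T x p a k i j) (vals i j (proc j a k))"
proof -
  assume h: "(a, k) \<in> preds i j"
  have "proc j a (Suc k) \<inter> preds i j = insert (a, k) (proc j a k \<inter> preds i j)"
    using h by (auto simp: proc_def less_Suc_eq)
  then show ?thesis by (simp add: vals_def)
qed

lemma mst_skip: "(a, k) \<notin> preds i j \<Longrightarrow> mst i j a k fl m \<Longrightarrow> mst i j a (Suc k) fl m"
  unfolding mst_def by (simp add: vals_skip)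

lemma mst_true: "(a, k) \<in> preds i j \<Longrightarrow> mst i j a k fl m \<Longrightarrow>
   fl = 0 \<or> Dv T x p a k + bc T x p a k i j < m \<Longrightarrow> mst i j a (Suc k) 1 (Dv T x p a k + bc T x p a k i j)"
proof -
  assume h: "(a, k) \<in> preds i j" "mst i j a k fl m" "fl = 0 \<or> Dv T x p a k + bc T x p a k i j < m"
  let ?A = "vals i j (proc j a k)" and ?v = "Dv T x p a k + bc T x p a k i j"
  have fin: "finite ?A" by (rule finite_vals)
  have "Min (insert ?v ?A) = ?v"
  proof (cases "?A = {}")
    case True then show ?thesis by simp
  next
    case False
    then have "fl = 1" "m = Min ?A" using h(2) unfolding mst_def by auto
    then have "?v < Min ?A" using h(3) by simp
    then show ?thesis using Min_insert[OF fin False, of ?v] by simp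
  qed
  then show ?thesis unfolding mst_def vals_ins[OF h(1)] by simp
qed

lemma mst_false: "(a, k) \<in> preds i j \<Longrightarrow> mst i j a k fl m \<Longrightarrow>
   \<not> (fl = 0 \<or> Dv T x p a k + bc T x p a k i j < m) \<Longrightarrow> mst i j a (Suc k) fl m"
proof -
  assume h: "(a, k) \<in> preds i j" "mst i j a k fl m" "\<not> (fl = 0 \<or> Dv T x p a k + bc T x p a k i j < m)"
  let ?A = "vals i j (proc j a k)" and ?v = "Dv T x p a k + bc T x p a k i j"
  have fin: "finite ?A" by (rule finite_vals)
  have ne: "?A \<noteq> {}" and fl: "fl = 1" and m: "m = Min ?A" using h(2,3) unfolding mst_def by auto
  have "Min (insert ?v ?A) = m" using Min_insert[OF fin ne, of ?v] h(3) m by simp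
  then show ?thesis unfolding mst_def vals_ins[OF h(1)] using fl by simp
qed

end


lemma htc_seq: "htc P c1 R B1 \<Longrightarrow> htc R c2 Q B2 \<Longrightarrow> htc P (Seq c1 c2) Q (B1 + B2)"
  by (rule wp_seq)

lemma htc_if: "htc (\<lambda>s. P s \<and> beval b s) c1 Q B \<Longrightarrow> htc (\<lambda>s. P s \<and> \<not> beval b s) c2 Q B \<Longrightarrow>
  htc P (If b c1 c2) Q (Suc B)"
  by (rule htc_pre[OF wp_if]) auto

lemma htc_ex: "(\<And>u. htc (P u) c (Q u) B) \<Longrightarrow> htc (\<lambda>s. \<exists>u. P u s) c (\<lambda>s. \<exists>u. Q u s) B"
  unfolding htc_def by blast

lemma htc_frame: "htc P c Q B \<Longrightarrow> htc (\<lambda>s. P s \<and> R) c (\<lambda>s. Q s \<and> R) B"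
  unfolding htc_def by blast

definition setv :: com where
  "setv = RStore VAe (RDiv (RNat (NSub (NR 5) (NR 7))) (RNat (NAdd (NSub (NR 4) (NR 6)) (NSub (NR 5) (NR 7)))))"

definition upd :: com where
  "upd = If (BOr (NEq (NR 11) (NConst 0)) (RLess (RLoad SAe) (RLoad MAe))) (Seq (RStore MAe (RLoad SAe)) (setn 11 1)) Skip"

definition b_cond :: bexp where "b_cond = BAnd (NEq (NR 6) (NR 4)) (NEq (NR 7) (NR 5))"

definition b_body :: com where
  "b_body = Seq (If b_cond Skip (Seq setv (Seq costloop upd))) (incr 7)"

definition bloop :: com where
  "bloop = While (NLess (NR 7) (NAdd (NR 5) (NConst 1))) b_body"

context prg
begin

definition J4 :: "nat \<Rightarrow> nat \<Rightarrow> nat \<Rightarrow> nat \<Rightarrow> nat \<Rightarrow> state \<Rightarrow> bool" where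
  "J4 i j a k k' s \<longleftrightarrow> ctx i j s \<and> fst s 6 = a \<and> fst s 9 = a * L \<and> fst s 7 = k \<and> a \<le> i \<and> j \<le> T \<and>
     mst i j a k' (fst s 11) (snd s mA)"

definition Kpre :: "nat \<Rightarrow> nat \<Rightarrow> nat \<Rightarrow> nat \<Rightarrow> nat \<times> real \<Rightarrow> state \<Rightarrow> bool" where
  "Kpre i j a k u s \<longleftrightarrow> K0 i j a k s \<and> fst s 11 = fst u \<and> snd s mA = snd u \<and> mst i j a k (fst u) (snd u)"

definition Kpost :: "nat \<Rightarrow> nat \<Rightarrow> nat \<Rightarrow> nat \<Rightarrow> nat \<times> real \<Rightarrow> state \<Rightarrow> bool" where
  "Kpost i j a k u s \<longleftrightarrow> Kpre i j a k u s \<and> snd s sA = Dv T x p a k + bc T x p a k i j"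

lemma b_cond_eval: "beval b_cond s \<longleftrightarrow> fst s 6 = fst s 4 \<and> fst s 7 = fst s 5"
  unfolding b_cond_def by auto

lemma setv_ok: "htc (\<lambda>s. J4 i j a k k s \<and> k \<le> j \<and> \<not> beval b_cond s) setv (\<lambda>s. \<exists>u. Kpre i j a k u s) 1"
  unfolding setv_def
  apply (rule htc_pre, rule wp_rstore)
  subgoal for s
    using ctx_inp[of i j s] ctx_regs[of i j s]
    by (auto simp: J4_def Kpre_def K0_def b_cond_eval neval_addr ctx_tmp vl_def)
  by simp

lemma costloop_mid: "htc (\<lambda>s. \<exists>u. Kpre i j a k u s) costloop (\<lambda>s. \<exists>u. Kpost i j a k u s) (T * 5 + 3)"
proof (rule htc_ex)
  fix u :: "nat \<times> real"
  have "htc (\<lambda>s. (K0 i j a k s \<and> fst s 11 = fst u \<and> snd s mA = snd u) \<and> mst i j a k (fst u) (snd u)) costloop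
     (\<lambda>s. (K0 i j a k s \<and> fst s 11 = fst u \<and> snd s mA = snd u \<and> snd s sA = Dv T x p a k + bc T x p a k i j)
          \<and> mst i j a k (fst u) (snd u)) (T * 5 + 3)"
    by (rule htc_frame[OF costloop_ok])
  then show "htc (Kpre i j a k u) costloop (Kpost i j a k u) (T * 5 + 3)"
    unfolding Kpre_def Kpost_def by (rule htc_pre[OF htc_post]) auto
qed

lemma K0_preds: "K0 i j a k s \<Longrightarrow> (a, k) \<in> preds i j"
  by (auto simp: K0_def preds_def)

lemma upd_ok: "htc (\<lambda>s. \<exists>u. Kpost i j a k u s) upd (\<lambda>s. J4 i j a k (Suc k) s) 3"
  unfolding upd_def
  apply (rule htc_pre)
    apply (rule wp_seq wp_if wp_nstore wp_skip wp_rstore)+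
  subgoal for s
    using ctx_inp[of i j s] ctx_regs[of i j s] K0_preds[of i j a k s]
      mst_true[of a k i j "fst s 11" "snd s mA"] mst_false[of a k i j "fst s 11" "snd s mA"]
    by (auto simp: J4_def Kpost_def Kpre_def K0_def neval_addr ctx_tmp ctx_nupd)
  by simp

lemma b_body_ok: "k < Suc j \<Longrightarrow> htc (J4 i j a k k) b_body (J4 i j a (Suc k) (Suc k)) (T * 5 + 9)"
proof -
  assume kj: "k < Suc j"
  have br2: "htc (\<lambda>s. J4 i j a k k s \<and> \<not> beval b_cond s) (Seq setv (Seq costloop upd)) (J4 i j a k (Suc k)) (T * 5 + 7)"
    apply (rule htc_pre[OF htc_seq[OF setv_ok[of i j a k] htc_seq[OF costloop_mid upd_ok]]])
    using kj by auto
  have br1: "htc (\<lambda>s. J4 i j a k k s \<and> beval b_cond s) Skip (J4 i j a k (Suc k)) (T * 5 + 7)"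
    apply (rule htc_pre[OF wp_skip])
    subgoal for s
      using ctx_regs[of i j s] mst_skip[of a k i j "fst s 11" "snd s mA"]
      by (auto simp: J4_def b_cond_eval preds_def)
    by simp
  have "htc (J4 i j a k k) (If b_cond Skip (Seq setv (Seq costloop upd))) (J4 i j a k (Suc k)) (Suc (T * 5 + 7))"
    by (rule htc_if[OF br1 br2])
  moreover have "htc (J4 i j a k (Suc k)) (incr 7) (J4 i j a (Suc k) (Suc k)) 1"
    apply (rule htc_pre[OF wp_nstore])
    subgoal for s by (auto simp: J4_def ctx_nupd)
    by simp
  ultimately show ?thesis unfolding b_body_def
    by (rule htc_pre[OF htc_seq]) auto
qed


lemma bloop_ok: "j \<le> T \<Longrightarrow> htc (J4 i j a 0 0) bloop (J4 i j a (Suc j) (Suc j)) ((T + 1) * (T * 5 + 10) + 1)"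
  unfolding bloop_def
  apply (rule htc_while0b[where M="T + 1" and B="T * 5 + 9" and I="\<lambda>k. J4 i j a k k"])
  subgoal for k s using ctx_regs[of i j s] by (auto simp: J4_def)
  subgoal for s using ctx_regs[of i j s] by (auto simp: J4_def)
  subgoal by (rule b_body_ok) auto
  by simp_all

end

definition a_body :: com where
  "a_body = Seq (setn 7 0) (Seq bloop (Seq (incr 6) (NStore (NConst 9) (NAdd (NAdd (NR 9) TN) (NConst 1)))))"

definition aloop :: com where
  "aloop = While (NLess (NR 6) (NAdd (NR 4) (NConst 1))) a_body"

context prg
begin

definition J3 :: "nat \<Rightarrow> nat \<Rightarrow> nat \<Rightarrow> state \<Rightarrow> bool" where
  "J3 i j k s \<longleftrightarrow> ctx i j s \<and> fst s 6 = k \<and> fst s 9 = k * L \<and> j \<le> T \<and> mst i j k 0 (fst s 11) (snd s mA)"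

lemma proc_next: "proc j a (Suc j) = proc j (Suc a) 0"
  by (auto simp: proc_def)

lemma mst_next: "mst i j a (Suc j) fl m = mst i j (Suc a) 0 fl m"
  by (simp add: mst_def proc_next)

lemma rowstep: "Suc (k * L + T) = Suc k * L" "k * L + T + 1 = Suc k * L"
  by (simp_all add: L_def)

lemma a_body_ok: "j \<le> T \<Longrightarrow> k < Suc i \<Longrightarrow> htc (J3 i j k) a_body (J3 i j (Suc k)) ((T + 1) * (T * 5 + 10) + 4)"
proof -
  assume jT: "j \<le> T" and ki: "k < Suc i"
  have s1: "htc (J3 i j k) (setn 7 0) (J4 i j k 0 0) 1"
    apply (rule htc_pre[OF wp_nstore])
    subgoal for s using ki by (auto simp: J3_def J4_def ctx_nupd)
    by simp
  have s3: "htc (J4 i j k (Suc j) (Suc j)) (Seq (incr 6) (NStore (NConst 9) (NAdd (NAdd (NR 9) TN) (NConst 1)))) (J3 i j (Suc k)) 2"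
    apply (rule htc_pre)
      apply (rule wp_seq wp_nstore)+
    subgoal for s using ctx_regs[of i j s] by (auto simp: J3_def J4_def ctx_nupd mst_next rowstep)
    by simp
  show ?thesis unfolding a_body_def
    by (rule htc_pre[OF htc_seq[OF s1 htc_seq[OF bloop_ok[OF jT] s3]]]) auto
qed

lemma aloop_ok: "i \<le> T \<Longrightarrow> j \<le> T \<Longrightarrow> htc (J3 i j 0) aloop (J3 i j (Suc i)) ((T + 1) * ((T + 1) * (T * 5 + 10) + 5) + 1)"
  unfolding aloop_def
  apply (rule htc_while0b[where M="T + 1" and B="(T + 1) * (T * 5 + 10) + 4" and I="J3 i j"])
  subgoal for k s using ctx_regs[of i j s] by (auto simp: J3_def)
  subgoal for s using ctx_regs[of i j s] by (auto simp: J3_def)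
  subgoal by (rule a_body_ok) auto
  by simp_all

end


definition z_cond :: bexp where "z_cond = BAnd (NEq (NR 4) (NConst 0)) (NEq (NR 5) (NConst 0))"
definition o_cond :: bexp where "o_cond = BAnd (NEq (NR 4) (NR 10)) (NEq (NR 5) (NSub TN (NR 10)))"
definition compute :: com where "compute = Seq (Seq (setn 11 0) (Seq (setn 6 0) (setn 9 0))) aloop"
definition cellA :: com where
  "cellA = If z_cond (RStore (DAe (NAdd (NR 8) (NR 5))) (RNat (NConst 0)))
              (Seq compute (RStore (DAe (NAdd (NR 8) (NR 5))) (RLoad MAe)))"
definition cellB :: com where
  "cellB = Seq (If o_cond (RStore (NConst 0) (RLoad (DAe (NAdd (NR 8) (NR 5))))) Skip) (incr 5)"
definition cell :: com where "cell = Seq cellA cellB"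
definition jloop :: com where "jloop = While (NLess (NR 5) (NAdd TN (NConst 1))) cell"
definition i_body :: com where
  "i_body = Seq jloop (Seq (incr 4) (Seq (NStore (NConst 8) (NAdd (NAdd (NR 8) TN) (NConst 1))) (setn 5 0)))"
definition iloop :: com where "iloop = While (NLess (NR 4) (NAdd TN (NConst 1))) i_body"
definition phase3 :: com where "phase3 = Seq (Seq (setn 4 0) (Seq (setn 8 0) (setn 5 0))) iloop"
definition prog :: com where "prog = Seq phase1 (Seq phase2 phase3)"

context prg
begin

lemma cell_inj: "j \<le> T \<Longrightarrow> b \<le> T \<Longrightarrow> a * L + b = i * L + j \<Longrightarrow> a = i \<and> b = j"
proof -
  assume h: "j \<le> T" "b \<le> T" "a * L + b = i * L + j"
  have L: "b < L" "j < L" "L \<noteq> 0" using h by (simp_all add: L_def)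
  have e1: "(b + a * L) div L = a" using L by simp
  have e2: "(j + i * L) div L = i" using L by simp
  have e3: "(b + a * L) mod L = b" using L by simp
  have e4: "(j + i * L) mod L = j" using L by simp
  have "b + a * L = j + i * L" using h(3) by simp
  then show ?thesis using e1 e2 e3 e4 by metis
qed

lemma Db_gt: "T + T < Db + n" by (simp add: Db_def)

lemma ctx_tabw: "j \<le> T \<Longrightarrow> ctx i j (f, g(Db + (i * L + j) := v)) = ctx i j (f, g)"
proof -
  assume jT: "j \<le> T"
  have ne: "a * L + b \<noteq> i * L + j" if "b \<le> T" "a < i \<or> a = i \<and> b < j" for a b
  proof
    assume "a * L + b = i * L + j"
    then have "a = i \<and> b = j" by (rule cell_inj[OF jT that(1)])
    then show False using that(2) by simp
  qed
  have fa: "\<forall>a b. b \<le> T \<longrightarrow> (a < i \<or> a = i \<and> b < j) \<longrightarrow>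
     (g(Db + (i * L + j) := v)) (Db + (a * L + b)) = g (Db + (a * L + b))"
    using ne by auto
  have "tab i j (f, g(Db + (i * L + j) := v)) = tab i j (f, g)"
    unfolding tab_def snd_conv using fa by auto
  moreover have "outp i j (f, g(Db + (i * L + j) := v)) = outp i j (f, g)"
  proof -
    have "(g(Db + (i * L + j) := v)) 0 = g 0" by (simp only: fun_upd_apply addr_neq if_False)
    then show ?thesis unfolding outp_def by simp
  qed
  moreover have "inp (f, g(Db + (i * L + j) := v)) = inp (f, g)"
    by (rule inp_rupd) (use Db_gt[of "i * L + j"] in simp)
  ultimately show ?thesis by (simp add: ctx_def rks_def)
qed

definition W :: "nat \<Rightarrow> nat \<Rightarrow> state \<Rightarrow> bool" where
  "W i j s \<longleftrightarrow> ctx i j s \<and> j \<le> T \<and> snd s (Db + (i * L + j)) = Dv T x p i j"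

lemma mst_init: "mst i j 0 0 0 m"
  by (simp add: mst_def proc_def vals_def)

lemma mst_final: "(i, j) \<noteq> (0, 0) \<Longrightarrow> mst i j (Suc i) 0 fl m \<Longrightarrow> m = Dv T x p i j"
proof -
  assume h: "(i, j) \<noteq> (0, 0)" "mst i j (Suc i) 0 fl m"
  have "proc j (Suc i) 0 \<inter> preds i j = preds i j" by (auto simp: proc_def preds_def)
  then have v: "vals i j (proc j (Suc i) 0) = (\<lambda>ab. Dv T x p (fst ab) (snd ab) + bc T x p (fst ab) (snd ab) i j) ` preds i j"
    by (simp add: vals_def)
  have "vals i j (proc j (Suc i) 0) \<noteq> {}" using v preds_ne[OF h(1)] by auto
  then have "m = Min (vals i j (proc j (Suc i) 0))" using h(2) by (auto simp: mst_def)
  then show ?thesis using v Dv_rec[OF h(1)] by simp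
qed

lemma z_cond_eval: "beval z_cond s \<longleftrightarrow> fst s 4 = 0 \<and> fst s 5 = 0" by (auto simp: z_cond_def)

lemma cellA_ok: "i \<le> T \<Longrightarrow> j \<le> T \<Longrightarrow>
  htc (ctx i j) cellA (W i j) ((T + 1) * ((T + 1) * (T * 5 + 10) + 5) + 6)"
proof -
  assume iT: "i \<le> T" and jT: "j \<le> T"
  have z: "htc (\<lambda>s. ctx i j s \<and> beval z_cond s) (RStore (DAe (NAdd (NR 8) (NR 5))) (RNat (NConst 0))) (W i j)
     ((T + 1) * ((T + 1) * (T * 5 + 10) + 5) + 5)"
    apply (rule htc_pre[OF wp_rstore])
    subgoal for s using ctx_inp[of i j s] ctx_regs[of i j s] jT ctx_tabw[OF jT, of i "fst s" "snd s" 0]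
      by (auto simp: W_def z_cond_eval neval_addr Dv_00)
    by simp
  have c1: "htc (\<lambda>s. ctx i j s \<and> \<not> beval z_cond s) (Seq (setn 11 0) (Seq (setn 6 0) (setn 9 0)))
     (\<lambda>s. J3 i j 0 s \<and> (i, j) \<noteq> (0, 0)) 3"
    apply (rule htc_pre)
      apply (rule wp_seq wp_nstore)+
    subgoal for s using ctx_regs[of i j s] jT by (auto simp: J3_def z_cond_eval ctx_nupd mst_init)
    by simp
  have c2: "htc (\<lambda>s. J3 i j 0 s \<and> (i, j) \<noteq> (0, 0)) aloop (\<lambda>s. J3 i j (Suc i) s \<and> (i, j) \<noteq> (0, 0))
      ((T + 1) * ((T + 1) * (T * 5 + 10) + 5) + 1)"
    by (rule htc_frame[OF aloop_ok[OF iT jT]])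
  have c3: "htc (\<lambda>s. J3 i j (Suc i) s \<and> (i, j) \<noteq> (0, 0)) (RStore (DAe (NAdd (NR 8) (NR 5))) (RLoad MAe)) (W i j) 1"
    apply (rule htc_pre[OF wp_rstore])
    subgoal for s using ctx_inp[of i j s] ctx_regs[of i j s] jT mst_final[of i j "fst s 11" "snd s mA"]
       ctx_tabw[OF jT, of i "fst s" "snd s" "snd s mA"]
      by (auto simp: W_def J3_def neval_addr)
    by simp
  have nz: "htc (\<lambda>s. ctx i j s \<and> \<not> beval z_cond s) (Seq compute (RStore (DAe (NAdd (NR 8) (NR 5))) (RLoad MAe))) (W i j)
     ((T + 1) * ((T + 1) * (T * 5 + 10) + 5) + 5)"
    unfolding compute_def
    by (rule htc_pre[OF htc_seq[OF htc_seq[OF c1 c2] c3]]) auto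
  show ?thesis unfolding cellA_def
    by (rule htc_pre[OF htc_if[OF z nz]]) auto
qed


lemma n1_eq: "n1 = T - n0"
proof -
  have "{..<T} = {t. t < T \<and> x t = 0} \<union> {t. t < T \<and> x t = 1}" using x01 by auto
  then have "T = card ({t. t < T \<and> x t = 0} \<union> {t. t < T \<and> x t = 1})" by (metis card_lessThan)
  also have "\<dots> = n0 + n1" by (rule card_Un_disjoint) auto
  finally show ?thesis by simp
qed

lemma n0_le: "n0 \<le> T"
proof -
  have "n0 \<le> card {..<T}" by (rule card_mono) auto
  then show ?thesis by simp
qed

lemma n1_le: "n1 \<le> T" using n1_eq by simp

lemma o_cond_eval: "ctx i j s \<Longrightarrow> beval o_cond s \<longleftrightarrow> i = n0 \<and> j = n1"
  using ctx_regs[of i j s] n1_eq unfolding o_cond_def by auto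

lemma tab_ext: "tab i j s \<Longrightarrow> snd s (Db + (i * L + j)) = Dv T x p i j \<Longrightarrow> tab i (Suc j) s"
  unfolding tab_def by (metis less_Suc_eq)

lemma tab_nupd: "tab i j (f(k := v), g) = tab i j (f, g)" by (simp add: tab_def)
lemma outp_nupd: "outp i j (f(k := v), g) = outp i j (f, g)" by (simp add: outp_def)
lemma tab_r0: "tab i j (f, g(0 := v)) = tab i j (f, g)"
  unfolding tab_def by (simp only: snd_conv fun_upd_apply addr_neq if_False)

lemma tab_row: "tab i (Suc T) s \<Longrightarrow> tab (Suc i) 0 s"
  unfolding tab_def
proof (intro allI impI)
  fix a b assume h: "\<forall>a b. b \<le> T \<longrightarrow> a < i \<or> a = i \<and> b < Suc T \<longrightarrow> snd s (Db + (a * L + b)) = Dv T x p a b"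
    "b \<le> T" "a < Suc i \<or> a = Suc i \<and> b < 0"
  then have "a < i \<or> a = i \<and> b < Suc T" by auto
  then show "snd s (Db + (a * L + b)) = Dv T x p a b" using h(1,2) by blast
qed

lemma ctx_next: "ctx i j (f, g) \<Longrightarrow> g (Db + (i * L + j)) = Dv T x p i j \<Longrightarrow> \<not> (i = n0 \<and> j = n1) \<Longrightarrow>
   ctx i (Suc j) (f(5 := Suc j), g)"
  unfolding ctx_def using tab_ext[of i j "(f, g)"]
  by (auto simp: inp_nupd rks_def outp_def less_Suc_eq tab_nupd)

lemma ctx_next_out: "ctx i j (f, g) \<Longrightarrow> g (Db + (i * L + j)) = Dv T x p i j \<Longrightarrow> i = n0 \<Longrightarrow> j = n1 \<Longrightarrow>
   ctx i (Suc j) (f(5 := Suc j), g(0 := Dv T x p i j))"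
proof -
  assume h: "ctx i j (f, g)" "g (Db + (i * L + j)) = Dv T x p i j" "i = n0" "j = n1"
  have t: "tab i (Suc j) (f, g)" using tab_ext[of i j "(f, g)"] h(1,2) by (simp add: ctx_def)
  have "tab i (Suc j) (f, g(0 := Dv T x p i j))" using t by (simp add: tab_r0)
  moreover have "inp (f(5 := Suc j), g(0 := Dv T x p i j))"
    using h(1) by (simp add: ctx_def inp_nupd inp_rupd)
  ultimately show ?thesis using h by (auto simp: ctx_def rks_def outp_def tab_nupd)
qed

lemma cellB_ok: "htc (W i j) cellB (ctx i (Suc j)) 3"
  unfolding cellB_def
  apply (rule htc_pre)
    apply (rule wp_seq wp_if wp_nstore wp_skip wp_rstore)+
  subgoal for s
    using ctx_inp[of i j s] ctx_regs[of i j s] o_cond_eval[of i j s]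
      ctx_next[of i j "fst s" "snd s"] ctx_next_out[of i j "fst s" "snd s"]
    by (auto simp: W_def neval_addr)
  by simp

lemma cell_ok: "i \<le> T \<Longrightarrow> j \<le> T \<Longrightarrow> htc (ctx i j) cell (ctx i (Suc j)) ((T + 1) * ((T + 1) * (T * 5 + 10) + 5) + 9)"
  unfolding cell_def by (rule htc_pre[OF htc_seq[OF cellA_ok cellB_ok]]) auto

lemma jloop_ok: "i \<le> T \<Longrightarrow> htc (ctx i 0) jloop (ctx i (Suc T))
   ((T + 1) * ((T + 1) * ((T + 1) * (T * 5 + 10) + 5) + 10) + 1)"
  unfolding jloop_def
  apply (rule htc_while0b[where M="T + 1" and B="(T + 1) * ((T + 1) * (T * 5 + 10) + 5) + 9" and I="ctx i"])
  subgoal for k s using ctx_regs[of i k s] by auto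
  subgoal for s using ctx_regs[of i "Suc T" s] by auto
  subgoal by (rule cell_ok) auto
  by simp_all

lemma ctx_row: "ctx i (Suc T) (f, g) \<Longrightarrow> ctx (Suc i) 0 (f(4 := Suc i, 8 := Suc i * L, 5 := 0), g)"
proof -
  assume h: "ctx i (Suc T) (f, g)"
  have "tab (Suc i) 0 (f, g)" using h tab_row unfolding ctx_def by blast
  moreover have "outp (Suc i) 0 (f, g)"
  proof -
    have o: "outp i (Suc T) (f, g)" using h by (simp add: ctx_def)
    show ?thesis unfolding outp_def
    proof
      assume "n0 < Suc i \<or> n0 = Suc i \<and> n1 < 0"
      then have "n0 < i \<or> n0 = i \<and> n1 < Suc T" using n1_le by auto
      then show "snd (f, g) 0 = Dv T x p n0 n1" using o unfolding outp_def by blast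
    qed
  qed
  ultimately show ?thesis using h by (auto simp: ctx_def inp_nupd rks_def tab_nupd outp_nupd)
qed

lemma i_body_ok: "k < Suc T \<Longrightarrow> htc (ctx k 0) i_body (ctx (Suc k) 0)
   ((T + 1) * ((T + 1) * ((T + 1) * (T * 5 + 10) + 5) + 10) + 4)"
proof -
  assume kT: "k < Suc T"
  have s2: "htc (ctx k (Suc T)) (Seq (incr 4) (Seq (NStore (NConst 8) (NAdd (NAdd (NR 8) TN) (NConst 1))) (setn 5 0)))
     (ctx (Suc k) 0) 3"
    apply (rule htc_pre)
      apply (rule wp_seq wp_nstore)+
    subgoal for s using ctx_regs[of k "Suc T" s] ctx_row[of k "fst s" "snd s"]
      by (auto simp: rowstep)
    by simp
  show ?thesis unfolding i_body_def
    by (rule htc_pre[OF htc_seq[OF jloop_ok s2]]) (use kT in auto)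
qed

lemma iloop_ok: "htc (ctx 0 0) iloop (ctx (Suc T) 0)
   ((T + 1) * ((T + 1) * ((T + 1) * ((T + 1) * (T * 5 + 10) + 5) + 10) + 5) + 1)"
  unfolding iloop_def
  apply (rule htc_while0b[where M="T + 1" and B="(T + 1) * ((T + 1) * ((T + 1) * (T * 5 + 10) + 5) + 10) + 4" and I="\<lambda>k. ctx k 0"])
  subgoal for k s using ctx_regs[of k 0 s] by auto
  subgoal for s using ctx_regs[of "Suc T" 0 s] by auto
  subgoal by (rule i_body_ok) auto
  by simp_all

lemma phase3_ok: "htc (\<lambda>s. inp s \<and> rks s \<and> fst s 10 = n0) phase3 (\<lambda>s. snd s 0 = Dv T x p n0 n1)
   ((T + 1) * ((T + 1) * ((T + 1) * ((T + 1) * (T * 5 + 10) + 5) + 10) + 5) + 4)"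
proof -
  have s1: "htc (\<lambda>s. inp s \<and> rks s \<and> fst s 10 = n0) (Seq (setn 4 0) (Seq (setn 8 0) (setn 5 0))) (ctx 0 0) 3"
    apply (rule htc_pre)
      apply (rule wp_seq wp_nstore)+
    subgoal for s by (auto simp: ctx_def inp_nupd rks_def tab_def outp_def)
    by simp
  have fin: "htc (ctx (Suc T) 0) Skip (\<lambda>s. snd s 0 = Dv T x p n0 n1) 1"
    apply (rule htc_pre[OF wp_skip])
    subgoal for s using n0_le by (auto simp: ctx_def outp_def)
    by simp
  have "htc (\<lambda>s. inp s \<and> rks s \<and> fst s 10 = n0) (Seq (Seq (setn 4 0) (Seq (setn 8 0) (setn 5 0))) iloop)
     (\<lambda>s. snd s 0 = Dv T x p n0 n1)
     ((T + 1) * ((T + 1) * ((T + 1) * ((T + 1) * (T * 5 + 10) + 5) + 10) + 5) + 4)"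
    by (rule htc_pre[OF htc_seq[OF s1 htc_post[OF iloop_ok]]]) (auto simp: ctx_def outp_def n0_le less_Suc_eq_le)
  then show ?thesis unfolding phase3_def .
qed

end


lemma poly_bound:
  fixes T :: nat
  assumes "1 \<le> T"
  shows "(T * (T * 4 + 6) + 2) + ((T * 4 + 3) +
     ((T + 1) * ((T + 1) * ((T + 1) * ((T + 1) * (T * 5 + 10) + 5) + 10) + 5) + 4)) \<le> 2000 * T ^ 5"
proof -
  have p: "T ^ a \<le> T ^ 5" if "a \<le> 5" for a using assms that by (simp add: power_increasing)
  have e: "(T * (T * 4 + 6) + 2) + ((T * 4 + 3) +
     ((T + 1) * ((T + 1) * ((T + 1) * ((T + 1) * (T * 5 + 10) + 5) + 10) + 5) + 4)) =
     5 * (T * T * T * T * T) + 30 * (T * T * T * T) + 75 * (T * T * T) + 109 * (T * T) + 95 * T + 39"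
    by (simp add: algebra_simps)
  have q: "T ^ 5 = T * T * T * T * T" "T ^ 4 = T * T * T * T" "T ^ 3 = T * T * T" "T ^ 2 = T * T"
    by (simp_all add: eval_nat_numeral)
  have f: "T ^ 4 \<le> T ^ 5" "T ^ 3 \<le> T ^ 5" "T ^ 2 \<le> T ^ 5" using p by auto
  have g: "T \<le> T ^ 5" using p[of 1] by simp
  have h: "1 \<le> T ^ 5" using p[of 0] by simp
  show ?thesis unfolding e using f g h unfolding q by linarith
qed


context prg
begin

lemma prog_ok: "htc inp prog (\<lambda>s. snd s 0 = Dv T x p n0 n1)
  ((T * (T * 4 + 6) + 2) + ((T * 4 + 3) +
     ((T + 1) * ((T + 1) * ((T + 1) * ((T + 1) * (T * 5 + 10) + 5) + 10) + 5) + 4)))"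
  unfolding prog_def by (rule htc_seq[OF phase1_ok htc_seq[OF phase2_ok phase3_ok]])

lemma init_inp: "inp (init_state T x p)"
  unfolding inp_def init_state_def by auto

end

theorem theorem1:
  shows "\<exists>(P::com) (C::real) (c::nat) (k::nat). C > 0 \<and>
    (\<forall>(T::nat) (x::nat \<Rightarrow> real) (p::nat \<Rightarrow> real).
       T > 0 \<and> (\<forall>t<T. x t \<in> {0, 1}) \<and> (\<forall>t<T. 0 \<le> p t \<and> p t \<le> 1) \<longrightarrow>
       (\<exists>n s'. exec P (init_state T x p) n s' \<and> n \<le> c * T ^ k \<and>
              \<bar>snd s' 0 - CalDist T x p\<bar> \<le> C * sqrt (real T)))"
proof -
  have main: "\<forall>(T::nat) (x::nat \<Rightarrow> real) (p::nat \<Rightarrow> real).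
       T > 0 \<and> (\<forall>t<T. x t \<in> {0, 1}) \<and> (\<forall>t<T. 0 \<le> p t \<and> p t \<le> 1) \<longrightarrow>
       (\<exists>n s'. exec prog (init_state T x p) n s' \<and> n \<le> 2000 * T ^ 5 \<and>
              \<bar>snd s' 0 - CalDist T x p\<bar> \<le> 1 * sqrt (real T))"
  proof (intro allI impI)
    fix T :: nat and x p :: "nat \<Rightarrow> real"
    assume h: "T > 0 \<and> (\<forall>t<T. x t \<in> {0, 1}) \<and> (\<forall>t<T. 0 \<le> p t \<and> p t \<le> 1)"
    interpret prg T x p
      by unfold_locales (use h in auto)
    obtain n s' where ex: "exec prog (init_state T x p) n s'"
      and nb: "n \<le> (T * (T * 4 + 6) + 2) + ((T * 4 + 3) +
       ((T + 1) * ((T + 1) * ((T + 1) * ((T + 1) * (T * 5 + 10) + 5) + 10) + 5) + 4))"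
      and out: "snd s' 0 = Dv T x p n0 n1"
      using prog_ok init_inp unfolding htc_def by blast
    have "n \<le> 2000 * T ^ 5" using nb poly_bound[of T] h by linarith
    moreover have "\<bar>snd s' 0 - CalDist T x p\<bar> \<le> 1 * sqrt (real T)"
      using out CalDist_eq by simp
    ultimately show "\<exists>n s'. exec prog (init_state T x p) n s' \<and> n \<le> 2000 * T ^ 5 \<and>
              \<bar>snd s' 0 - CalDist T x p\<bar> \<le> 1 * sqrt (real T)" using ex by blast
  qed
  have "(1::real) > 0" by simp
  with main show ?thesis by blast
qed


end
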